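(* Let a chemical reaction network satisfying (H1) and (H2) consist of exactly $2N$ connected components which, for $i=1,\dots,N$, come in pairs \[ Y_i+S_{i,0}\rightleftarrows U_{i,1}\to\cdots\rightleftarrows U_{i,L_i}\to Y_i+S_{i,L_i},\qquad \widetilde Y_i+S_{i,L_i}\rightleftarrows V_{i,L_i}\to\widetilde Y_i+S_{i,L_i-1}\rightleftarrows\cdots\rightleftarrows V_{i,1}\to\widetilde Y_i+S_{i,0}, \] with rate constants $a_{i,j},b_{i,j},c_{i,j},\tilde a_{i,j},\tilde b_{i,j},\tilde c_{i,j}$ as in the context. Then the associated system is identifiable (all rate constants are identifiable) from $s_{1,L_1},\dots,s_{N,L_N}$, and for each $i$ it suffices to use $s_{i,L_i}^{(\ell)}$ with $1\le\ell\le\max\{2,2L_i-1\}$.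
   Context: Species are capital letters, concentrations lower-case letters. A chemical reaction network is a finite directed graph on complexes with reactions $y\to y'$ carrying rate constants $k_{yy'}>0$ (vector $\mathbf{k}$); mass-action system $\dot{\mathbf{x}}=\sum k_{yy'}\mathbf{x}^y(y'-y)$. Total derivative: $\dot\varphi=\sum_i\frac{\partial\varphi}{\partial x_i}\dot x_i$ with $\dot x_i$ replaced by the right-hand side; $\varphi^{(\ell)}$ the $\ell$-th iterate. A map $\psi$ of $\mathbf{k}$ is identifiable from $x_{i_1},\dots,x_{i_t}$ using orders $1\le\ell\le D$ if, for positive $\mathbf{k}^*,\mathbf{k}^{**}$, equality of $x_{i_j}^{(\ell)}(\mathbf{x},\mathbf{k}^* )$ and $x_{i_j}^{(\ell)}(\mathbf{x},\mathbf{k}^{**})$ as polynomials in $\mathbf{x}$ for all $1\le \ell\le D$ and all $j$ implies $\psi(\mathbf{k}^* )=\psi(\mathbf{k}^{**})$; the system is identifiable if this holds for $\psi=$ identity. (H1) Every connected component has the form $Y+S_0\rightleftarrows U_1\to\cdots\rightleftarrows U_L\to Y+S_L$ (reactions $Y+S_{j-1}\to U_j$, $U_j\to Y+S_{j-1}$, $U_j\to Y+S_j$), unique enzyme $Y$; intermediates distinct throughout the network; the non-intermediates of a component are pairwise distinct but may appear in other components; each complex in a unique component. $\mathscr{S}_U$ = substrates/products of the component of intermediate $U$. (H2) A partition $\mathscr{S}^{(0)}\sqcup\cdots\sqcup\mathscr{S}^{(M)}$ ($M\ge2$, nonempty parts, $\mathscr{S}^{(0)}$ the intermediates) such that for each intermediate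 $U$ with enzyme $Y$ there is $\alpha\ge1$ with $\mathscr{S}_U\subseteq\mathscr{S}^{(\alpha)}$, $Y\notin\mathscr{S}^{(\alpha)}$. Rates: $Y_i+S_{i,j-1}\to U_{i,j}$: $a_{i,j}$; $U_{i,j}\to Y_i+S_{i,j-1}$: $b_{i,j}$; $U_{i,j}\to Y_i+S_{i,j}$: $c_{i,j}$; $\widetilde Y_i+S_{i,j}\to V_{i,j}$: $\tilde a_{i,j}$; $V_{i,j}\to\widetilde Y_i+S_{i,j}$: $\tilde b_{i,j}$; $V_{i,j}\to\widetilde Y_i+S_{i,j-1}$: $\tilde c_{i,j}$. *)

theory Defs
  imports "HOL-Analysis.Analysis"
begin

type_synonym 's complex = "'s \<Rightarrow> nat"

definition monom :: "('s::finite) complex \<Rightarrow> ('s \<Rightarrow> real) \<Rightarrow> real" where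
  "monom y x = (\<Prod>t\<in>UNIV. x t ^ y t)"

definition mass_action ::
  "'r set \<Rightarrow> ('r \<Rightarrow> ('s::finite) complex) \<Rightarrow> ('r \<Rightarrow> 's complex) \<Rightarrow> ('r \<Rightarrow> real)
     \<Rightarrow> ('s \<Rightarrow> real) \<Rightarrow> 's \<Rightarrow> real" where
  "mass_action R src tgt k x s =
     (\<Sum>r\<in>R. k r * monom (src r) x * (real (tgt r s) - real (src r s)))"

definition pdiff :: "(('s \<Rightarrow> real) \<Rightarrow> real) \<Rightarrow> ('s \<Rightarrow> real) \<Rightarrow> 's \<Rightarrow> real" where
  "pdiff \<phi> x s = deriv (\<lambda>t. \<phi> (x(s := x s + t))) 0"

definition total_deriv ::
  "(('s::finite \<Rightarrow> real) \<Rightarrow> 's \<Rightarrow> real) \<Rightarrow> (('s \<Rightarrow> real) \<Rightarrow> real) \<Rightarrow> ('s \<Rightarrow> real) \<Rightarrow> real" where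
  "total_deriv F \<phi> = (\<lambda>x. \<Sum>s\<in>UNIV. pdiff \<phi> x s * F x s)"

definition total_deriv_iter ::
  "(('s::finite \<Rightarrow> real) \<Rightarrow> 's \<Rightarrow> real) \<Rightarrow> nat \<Rightarrow> (('s \<Rightarrow> real) \<Rightarrow> real) \<Rightarrow> ('s \<Rightarrow> real) \<Rightarrow> real" where
  "total_deriv_iter F l \<phi> = (total_deriv F ^^ l) \<phi>"

text \<open>Reaction labels: Ra i j : Y_i+S_{i,j-1} -> U_{i,j} (rate a_{i,j}),
  Rb i j : U_{i,j} -> Y_i+S_{i,j-1} (b_{i,j}), Rc i j : U_{i,j} -> Y_i+S_{i,j} (c_{i,j}),
  Rta i j : Yt_i+S_{i,j} -> V_{i,j} (tilde a), Rtb i j : V_{i,j} -> Yt_i+S_{i,j} (tilde b),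
  Rtc i j : V_{i,j} -> Yt_i+S_{i,j-1} (tilde c).\<close>
datatype rlab = Ra nat nat | Rb nat nat | Rc nat nat | Rta nat nat | Rtb nat nat | Rtc nat nat

definition cpx1 :: "'s \<Rightarrow> 's complex" where
  "cpx1 u = (\<lambda>t. if t = u then 1 else 0)"

definition cpx2 :: "'s \<Rightarrow> 's \<Rightarrow> 's complex" where
  "cpx2 y s = (\<lambda>t. (if t = y then 1 else 0) + (if t = s then 1 else 0))"

definition labs :: "nat \<Rightarrow> (nat \<Rightarrow> nat) \<Rightarrow> rlab set" where
  "labs N L = (\<Union>i\<in>{1..N}. \<Union>j\<in>{1..L i}.
      {Ra i j, Rb i j, Rc i j, Rta i j, Rtb i j, Rtc i j})"

fun src :: "(nat \<Rightarrow> 's) \<Rightarrow> (nat \<Rightarrow> 's) \<Rightarrow> (nat \<Rightarrow> nat \<Rightarrow> 's) \<Rightarrow> (nat \<Rightarrow> nat \<Rightarrow> 's)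
    \<Rightarrow> (nat \<Rightarrow> nat \<Rightarrow> 's) \<Rightarrow> rlab \<Rightarrow> 's complex" where
  "src Y Yt S U V (Ra i j) = cpx2 (Y i) (S i (j - 1))"
| "src Y Yt S U V (Rb i j) = cpx1 (U i j)"
| "src Y Yt S U V (Rc i j) = cpx1 (U i j)"
| "src Y Yt S U V (Rta i j) = cpx2 (Yt i) (S i j)"
| "src Y Yt S U V (Rtb i j) = cpx1 (V i j)"
| "src Y Yt S U V (Rtc i j) = cpx1 (V i j)"

fun tgt :: "(nat \<Rightarrow> 's) \<Rightarrow> (nat \<Rightarrow> 's) \<Rightarrow> (nat \<Rightarrow> nat \<Rightarrow> 's) \<Rightarrow> (nat \<Rightarrow> nat \<Rightarrow> 's)
    \<Rightarrow> (nat \<Rightarrow> nat \<Rightarrow> 's) \<Rightarrow> rlab \<Rightarrow> 's complex" where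
  "tgt Y Yt S U V (Ra i j) = cpx1 (U i j)"
| "tgt Y Yt S U V (Rb i j) = cpx2 (Y i) (S i (j - 1))"
| "tgt Y Yt S U V (Rc i j) = cpx2 (Y i) (S i j)"
| "tgt Y Yt S U V (Rta i j) = cpx1 (V i j)"
| "tgt Y Yt S U V (Rtb i j) = cpx2 (Yt i) (S i j)"
| "tgt Y Yt S U V (Rtc i j) = cpx2 (Yt i) (S i (j - 1))"

definition chain_field ::
  "nat \<Rightarrow> (nat \<Rightarrow> nat) \<Rightarrow> (nat \<Rightarrow> 's::finite) \<Rightarrow> (nat \<Rightarrow> 's) \<Rightarrow> (nat \<Rightarrow> nat \<Rightarrow> 's)
     \<Rightarrow> (nat \<Rightarrow> nat \<Rightarrow> 's) \<Rightarrow> (nat \<Rightarrow> nat \<Rightarrow> 's) \<Rightarrow> (rlab \<Rightarrow> real)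
     \<Rightarrow> ('s \<Rightarrow> real) \<Rightarrow> 's \<Rightarrow> real" where
  "chain_field N L Y Yt S U V k =
     mass_action (labs N L) (src Y Yt S U V) (tgt Y Yt S U V) k"

definition intermediates :: "nat \<Rightarrow> (nat \<Rightarrow> nat) \<Rightarrow> (nat \<Rightarrow> nat \<Rightarrow> 's) \<Rightarrow> (nat \<Rightarrow> nat \<Rightarrow> 's) \<Rightarrow> 's set" where
  "intermediates N L U V = (\<Union>i\<in>{1..N}. U i ` {1..L i} \<union> V i ` {1..L i})"

definition nonintermediates :: "nat \<Rightarrow> (nat \<Rightarrow> nat) \<Rightarrow> (nat \<Rightarrow> 's) \<Rightarrow> (nat \<Rightarrow> 's)
    \<Rightarrow> (nat \<Rightarrow> nat \<Rightarrow> 's) \<Rightarrow> 's set" where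
  "nonintermediates N L Y Yt S = (\<Union>i\<in>{1..N}. {Y i, Yt i} \<union> S i ` {0..L i})"

text \<open>Component indices: (False, i) is the forward chain with enzyme Y_i,
  (True, i) is the backward chain with enzyme Yt_i.\<close>
definition comp_complexes :: "(nat \<Rightarrow> nat) \<Rightarrow> (nat \<Rightarrow> 's) \<Rightarrow> (nat \<Rightarrow> 's) \<Rightarrow> (nat \<Rightarrow> nat \<Rightarrow> 's)
    \<Rightarrow> (nat \<Rightarrow> nat \<Rightarrow> 's) \<Rightarrow> (nat \<Rightarrow> nat \<Rightarrow> 's) \<Rightarrow> bool \<times> nat \<Rightarrow> 's complex set" where
  "comp_complexes L Y Yt S U V c =
     (if fst c then (\<lambda>j. cpx2 (Yt (snd c)) (S (snd c) j)) ` {0..L (snd c)} \<union> (\<lambda>j. cpx1 (V (snd c) j)) ` {1..L (snd c)}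
      else (\<lambda>j. cpx2 (Y (snd c)) (S (snd c) j)) ` {0..L (snd c)} \<union> (\<lambda>j. cpx1 (U (snd c) j)) ` {1..L (snd c)})"

definition H1 :: "nat \<Rightarrow> (nat \<Rightarrow> nat) \<Rightarrow> (nat \<Rightarrow> 's) \<Rightarrow> (nat \<Rightarrow> 's) \<Rightarrow> (nat \<Rightarrow> nat \<Rightarrow> 's)
    \<Rightarrow> (nat \<Rightarrow> nat \<Rightarrow> 's) \<Rightarrow> (nat \<Rightarrow> nat \<Rightarrow> 's) \<Rightarrow> bool" where
  "H1 N L Y Yt S U V \<longleftrightarrow>
     (\<forall>i\<in>{1..N}. 1 \<le> L i) \<and>
     \<comment> \<open>intermediates are pairwise distinct throughout the network\<close>
     inj_on (\<lambda>(b, i, j). if b then V i j else U i j)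
        {(b, i, j). i \<in> {1..N} \<and> j \<in> {1..L i}} \<and>
     \<comment> \<open>intermediates are not substrates/products/enzymes\<close>
     intermediates N L U V \<inter> nonintermediates N L Y Yt S = {} \<and>
     \<comment> \<open>non-intermediates of a component are pairwise distinct\<close>
     (\<forall>i\<in>{1..N}. inj_on (S i) {0..L i} \<and> Y i \<notin> S i ` {0..L i} \<and> Yt i \<notin> S i ` {0..L i}) \<and>
     \<comment> \<open>each complex lies in a unique component\<close>
     (\<forall>c\<in>UNIV \<times> {1..N}. \<forall>c'\<in>UNIV \<times> {1..N}. c \<noteq> c' \<longrightarrow>
        comp_complexes L Y Yt S U V c \<inter> comp_complexes L Y Yt S U V c' = {})"

definition H2 :: "nat \<Rightarrow> (nat \<Rightarrow> nat) \<Rightarrow> (nat \<Rightarrow> 's) \<Rightarrow> (nat \<Rightarrow> 's) \<Rightarrow> (nat \<Rightarrow> nat \<Rightarrow> 's)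
    \<Rightarrow> (nat \<Rightarrow> nat \<Rightarrow> 's) \<Rightarrow> (nat \<Rightarrow> nat \<Rightarrow> 's) \<Rightarrow> bool" where
  "H2 N L Y Yt S U V \<longleftrightarrow>
     (\<exists>M::nat. \<exists>p::'s \<Rightarrow> nat.
        let Sp = intermediates N L U V \<union> nonintermediates N L Y Yt S in
        2 \<le> M \<and> (\<forall>s\<in>Sp. p s \<le> M) \<and> (\<forall>\<alpha>\<le>M. \<exists>s\<in>Sp. p s = \<alpha>) \<and>
        (\<forall>s\<in>Sp. p s = 0 \<longleftrightarrow> s \<in> intermediates N L U V) \<and>
        (\<forall>i\<in>{1..N}. \<forall>j\<in>{1..L i}.
           (\<exists>\<alpha>\<ge>1. (\<forall>j'\<in>{0..L i}. p (S i j') = \<alpha>) \<and> p (Y i) \<noteq> \<alpha>) \<and>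
           (\<exists>\<alpha>\<ge>1. (\<forall>j'\<in>{0..L i}. p (S i j') = \<alpha>) \<and> p (Yt i) \<noteq> \<alpha>)))"

end

theory Submission
  imports Defs
begin


definition le_c :: "'s complex \<Rightarrow> 's complex \<Rightarrow> bool" where
  "le_c a b \<longleftrightarrow> (\<forall>t. a t \<le> b t)"
definition sub_add :: "'s complex \<Rightarrow> 's complex \<Rightarrow> 's \<Rightarrow> 's complex" where
  "sub_add g a s = (\<lambda>t. g t - a t + (if t = s then 1 else 0))"
definition dec :: "'s complex \<Rightarrow> 's \<Rightarrow> 's complex" where
  "dec b s = (\<lambda>t. if t = s then b t - 1 else b t)"
definition padd :: "'s complex \<Rightarrow> 's complex \<Rightarrow> 's complex" where
  "padd a b = (\<lambda>t. a t + b t)"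
definition lieC :: "'r set \<Rightarrow> ('r \<Rightarrow> ('s::finite) complex) \<Rightarrow> ('r \<Rightarrow> 's complex) \<Rightarrow> ('r \<Rightarrow> real)
   \<Rightarrow> ('s complex \<Rightarrow> real) \<Rightarrow> 's complex \<Rightarrow> real" where
  "lieC R sr tg k c g = (\<Sum>r\<in>R. if le_c (sr r) g then
      k r * (\<Sum>s\<in>UNIV. (real (tg r s) - real (sr r s)) * ((real (g s) + 1 - real (sr r s)) * c (sub_add g (sr r) s)))
     else 0)"
definition Bnd :: "nat \<Rightarrow> 's complex set" where
  "Bnd K = {b. \<forall>t. b t \<le> K}"
definition bnd :: "nat \<Rightarrow> ('s complex \<Rightarrow> real) \<Rightarrow> bool" where
  "bnd K c \<longleftrightarrow> (\<forall>b. c b \<noteq> 0 \<longrightarrow> b \<in> Bnd K)"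
definition peval :: "nat \<Rightarrow> (('s::finite) complex \<Rightarrow> real) \<Rightarrow> ('s \<Rightarrow> real) \<Rightarrow> real" where
  "peval K c x = (\<Sum>b\<in>Bnd K. c b * monom b x)"

lemma finite_Bnd: "finite (Bnd K :: ('s::finite) complex set)"
proof -
  have "Bnd K = (PiE UNIV (\<lambda>_. {..K}) :: 's complex set)"
    by (auto simp: Bnd_def PiE_UNIV_domain)
  thus ?thesis by (simp add: finite_PiE)
qed

lemma monom_split: "monom b x = x s ^ b s * (\<Prod>t\<in>UNIV-{s}. x t ^ b t)"
  unfolding monom_def by (simp add: prod.remove)

lemma monom_deriv:
  "((\<lambda>t. monom b (x(s := x s + t))) has_field_derivative (real (b s) * monom (dec b s) x)) (at 0)"
proof -
  define P where "P = (\<Prod>t\<in>UNIV-{s}. x t ^ b t)"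
  have e: "monom b (x(s := x s + t)) = (x s + t) ^ b s * P" for t
    unfolding P_def by (subst monom_split[of _ _ s]) (auto intro!: prod.cong)
  have d: "monom (dec b s) x = x s ^ (b s - 1) * P"
    unfolding P_def by (subst monom_split[of _ _ s]) (auto simp: dec_def intro!: prod.cong)
  have "((\<lambda>t. (x s + t) ^ b s * P) has_field_derivative (real (b s) * (x s + 0) ^ (b s - 1) * 1 * P)) (at 0)"
    by (intro derivative_eq_intros) auto
  thus ?thesis unfolding e d by (simp add: mult.assoc)
qed

lemma peval_deriv:
  "((\<lambda>t. peval K c (x(s := x s + t))) has_field_derivative
      (\<Sum>b\<in>Bnd K. c b * (real (b s) * monom (dec b s) x))) (at 0)"
  unfolding peval_def
  by (intro DERIV_sum DERIV_cmult monom_deriv)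

lemma pdiff_peval: "pdiff (peval K c) x s = (\<Sum>b\<in>Bnd K. c b * (real (b s) * monom (dec b s) x))"
  unfolding pdiff_def using peval_deriv by (rule DERIV_imp_deriv)

lemma monom_padd: "monom (padd a b) x = monom a x * monom b x"
  unfolding monom_def padd_def by (simp add: power_add prod.distrib)


lemma core_reindex:
  fixes a :: "('s::finite) complex"
  assumes a2: "\<And>t. a t \<le> 2" and bc: "bnd K c"
  shows "(\<Sum>b\<in>Bnd K. c b * (real (b s) * monom (padd (dec b s) a) x)) =
         (\<Sum>g\<in>Bnd (K+2). if le_c a g then (real (g s) + 1 - real (a s)) * c (sub_add g a s) * monom g x else 0)"
proof -
  let ?S0 = "{b\<in>Bnd K. 1 \<le> b s}"
  have fin: "finite (Bnd K :: 's complex set)" "finite (Bnd (K+2) :: 's complex set)" by (rule finite_Bnd)+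
  have "(\<Sum>b\<in>Bnd K. c b * (real (b s) * monom (padd (dec b s) a) x)) =
        (\<Sum>b\<in>?S0. c b * (real (b s) * monom (padd (dec b s) a) x))"
    by (rule sum.mono_neutral_right) (use fin in auto)
  also have "\<dots> = (\<Sum>g\<in>Bnd (K+2). if le_c a g then (real (g s) + 1 - real (a s)) * c (sub_add g a s) * monom g x else 0)"
  proof (rule sum.reindex_bij_witness_not_neutral[where S'="{b\<in>?S0. c b = 0}"
        and T'="{g\<in>Bnd (K+2). \<not> le_c a g \<or> c (sub_add g a s) = 0}"
        and j="\<lambda>b. padd (dec b s) a" and i="\<lambda>g. sub_add g a s"])
    show "finite {b\<in>?S0. c b = 0}" using fin by auto
    show "finite {g\<in>Bnd (K+2). \<not> le_c a g \<or> c (sub_add g a s) = 0}" using fin by auto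
    fix b assume b: "b \<in> ?S0 - {b\<in>?S0. c b = 0}"
    have e1: "sub_add (padd (dec b s) a) a s = b"
      using b by (auto simp: sub_add_def padd_def dec_def fun_eq_iff)
    show "sub_add (padd (dec b s) a) a s = b" by (rule e1)
    have "dec b s t \<le> K" for t using b by (auto simp: dec_def Bnd_def intro: le_trans[OF diff_le_self])
    hence "padd (dec b s) a t \<le> K + 2" for t using a2[of t] unfolding padd_def
      by (metis add_mono)
    hence m1: "padd (dec b s) a \<in> Bnd (K+2)" by (simp add: Bnd_def)
    have m2: "le_c a (padd (dec b s) a)" by (auto simp: le_c_def padd_def)
    show "padd (dec b s) a \<in> Bnd (K + 2) - {g\<in>Bnd (K+2). \<not> le_c a g \<or> c (sub_add g a s) = 0}"
      using m1 m2 b by (simp add: e1)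
  next
    fix g assume g: "g \<in> Bnd (K + 2) - {g\<in>Bnd (K+2). \<not> le_c a g \<or> c (sub_add g a s) = 0}"
    hence le: "\<And>t. a t \<le> g t" and cn: "c (sub_add g a s) \<noteq> 0" by (auto simp: le_c_def)
    show "padd (dec (sub_add g a s) s) a = g"
      using le by (auto simp: sub_add_def padd_def dec_def fun_eq_iff)
    show "sub_add g a s \<in> ?S0 - {b\<in>?S0. c b = 0}"
      using cn bc by (auto simp: bnd_def sub_add_def)
  next
    fix b assume "b \<in> {b\<in>?S0. c b = 0}"
    thus "c b * (real (b s) * monom (padd (dec b s) a) x) = 0" by simp
  next
    fix g assume "g \<in> {g\<in>Bnd (K+2). \<not> le_c a g \<or> c (sub_add g a s) = 0}"
    thus "(if le_c a g then (real (g s) + 1 - real (a s)) * c (sub_add g a s) * monom g x else 0) = 0" by auto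
  next
    fix b assume b: "b \<in> ?S0"
    have e1: "sub_add (padd (dec b s) a) a s = b"
      using b by (auto simp: sub_add_def padd_def dec_def fun_eq_iff)
    have le: "le_c a (padd (dec b s) a)" by (auto simp: le_c_def padd_def)
    have "real (padd (dec b s) a s) + 1 - real (a s) = real (b s)"
      using b by (auto simp: padd_def dec_def of_nat_diff)
    thus "(if le_c a (padd (dec b s) a) then (real (padd (dec b s) a s) + 1 - real (a s)) *
            c (sub_add (padd (dec b s) a) a s) * monom (padd (dec b s) a) x else 0) =
          c b * (real (b s) * monom (padd (dec b s) a) x)"
      using le e1 by simp
  qed
  finally show ?thesis .
qed

lemma total_deriv_peval:
  fixes R :: "'r set" and sr tg :: "'r \<Rightarrow> ('s::finite) complex"
  assumes fR: "finite R" and a2: "\<And>r t. sr r t \<le> 2" and bc: "bnd K c"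
  shows "total_deriv (mass_action R sr tg k) (peval K c) x = peval (K+2) (lieC R sr tg k c) x"
proof -
  define T where "T = (\<lambda>s r g. if le_c (sr r) g then k r * (real (tg r s) - real (sr r s)) *
      ((real (g s) + 1 - real (sr r s)) * c (sub_add g (sr r) s)) * monom g x else 0)"
  have "total_deriv (mass_action R sr tg k) (peval K c) x =
     (\<Sum>s\<in>UNIV. (\<Sum>b\<in>Bnd K. c b * (real (b s) * monom (dec b s) x)) *
        (\<Sum>r\<in>R. k r * monom (sr r) x * (real (tg r s) - real (sr r s))))"
    by (simp add: total_deriv_def pdiff_peval mass_action_def)
  also have "\<dots> = (\<Sum>s\<in>UNIV. \<Sum>r\<in>R. k r * (real (tg r s) - real (sr r s)) *
        (\<Sum>b\<in>Bnd K. c b * (real (b s) * monom (padd (dec b s) (sr r)) x)))"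
  proof (rule sum.cong[OF refl])
    fix s
    show "(\<Sum>b\<in>Bnd K. c b * (real (b s) * monom (dec b s) x)) *
        (\<Sum>r\<in>R. k r * monom (sr r) x * (real (tg r s) - real (sr r s))) =
      (\<Sum>r\<in>R. k r * (real (tg r s) - real (sr r s)) *
        (\<Sum>b\<in>Bnd K. c b * (real (b s) * monom (padd (dec b s) (sr r)) x)))"
      unfolding sum_distrib_left sum_distrib_right monom_padd
      by (rule sum.cong[OF refl], rule sum.cong[OF refl]) (simp add: mult_ac)
  qed
  also have "\<dots> = (\<Sum>s\<in>UNIV. \<Sum>r\<in>R. \<Sum>g\<in>Bnd (K+2). T s r g)"
    unfolding T_def core_reindex[OF a2 bc] sum_distrib_left
    by (rule sum.cong[OF refl], rule sum.cong[OF refl], rule sum.cong[OF refl]) (simp add: mult_ac)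
  also have "\<dots> = (\<Sum>r\<in>R. \<Sum>s\<in>UNIV. \<Sum>g\<in>Bnd (K+2). T s r g)"
    by (rule sum.swap)
  also have "\<dots> = (\<Sum>r\<in>R. \<Sum>g\<in>Bnd (K+2). \<Sum>s\<in>UNIV. T s r g)"
    by (rule sum.cong[OF refl], rule sum.swap)
  also have "\<dots> = (\<Sum>g\<in>Bnd (K+2). \<Sum>r\<in>R. \<Sum>s\<in>UNIV. T s r g)"
    by (rule sum.swap)
  also have "\<dots> = peval (K+2) (lieC R sr tg k c) x"
    unfolding peval_def lieC_def sum_distrib_right
    by (rule sum.cong[OF refl], rule sum.cong[OF refl]) (simp add: T_def sum_distrib_left sum_distrib_right mult_ac)
  finally show ?thesis .
qed


lemma bnd_lieC:
  fixes R :: "'r set" and sr tg :: "'r \<Rightarrow> ('s::finite) complex"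
  assumes a2: "\<And>r t. sr r t \<le> 2" and bc: "bnd K c"
  shows "bnd (K+2) (lieC R sr tg k c)"
  unfolding bnd_def
proof (intro allI impI)
  fix g assume "lieC R sr tg k c g \<noteq> 0"
  then obtain r where "(if le_c (sr r) g then k r * (\<Sum>s\<in>UNIV. (real (tg r s) - real (sr r s)) *
      ((real (g s) + 1 - real (sr r s)) * c (sub_add g (sr r) s))) else 0) \<noteq> 0"
    unfolding lieC_def using sum.not_neutral_contains_not_neutral by blast
  hence le: "le_c (sr r) g" and "(\<Sum>s\<in>UNIV. (real (tg r s) - real (sr r s)) *
      ((real (g s) + 1 - real (sr r s)) * c (sub_add g (sr r) s))) \<noteq> 0"
    by (auto split: if_splits)
  then obtain s where "(real (tg r s) - real (sr r s)) *
      ((real (g s) + 1 - real (sr r s)) * c (sub_add g (sr r) s)) \<noteq> 0"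
    using sum.not_neutral_contains_not_neutral by blast
  hence "c (sub_add g (sr r) s) \<noteq> 0" by auto
  hence "sub_add g (sr r) s \<in> Bnd K" using bc by (auto simp: bnd_def)
  hence h1: "g t - sr r t + (if t = s then 1 else 0) \<le> K" for t unfolding Bnd_def sub_add_def by auto
  have "g t \<le> K + 2" for t
  proof -
    have "sr r t \<le> g t" using le by (simp add: le_c_def)
    moreover have "g t - sr r t \<le> K" using h1[of t] by linarith
    moreover have "sr r t \<le> 2" by (rule a2)
    ultimately show ?thesis by linarith
  qed
  thus "g \<in> Bnd (K+2)" by (simp add: Bnd_def)
qed

lemma peval_mono:
  assumes "bnd K c" "K \<le> K'"
  shows "peval K' c = peval K (c :: ('s::finite) complex \<Rightarrow> real)"
proof
  fix x
  have sub: "Bnd K \<subseteq> (Bnd K' :: 's complex set)" using assms(2) by (auto simp: Bnd_def intro: le_trans)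
  show "peval K' c x = peval K c x"
    unfolding peval_def
    by (rule sum.mono_neutral_right[OF finite_Bnd sub]) (use assms(1) in \<open>auto simp: bnd_def\<close>)
qed

lemma iter_peval:
  fixes R :: "'r set" and sr tg :: "'r \<Rightarrow> ('s::finite) complex"
  assumes fR: "finite R" and a2: "\<And>r t. sr r t \<le> 2" and bc: "bnd K c"
  shows "bnd (K + 2*l) ((lieC R sr tg k ^^ l) c) \<and>
         total_deriv_iter (mass_action R sr tg k) l (peval K c) = peval (K + 2*l) ((lieC R sr tg k ^^ l) c)"
proof (induction l)
  case 0
  then show ?case using bc by (simp add: total_deriv_iter_def)
next
  case (Suc l)
  have b: "bnd (K + 2*l) ((lieC R sr tg k ^^ l) c)" using Suc by simp
  have "total_deriv_iter (mass_action R sr tg k) (Suc l) (peval K c) =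
        total_deriv (mass_action R sr tg k) (total_deriv_iter (mass_action R sr tg k) l (peval K c))"
    by (simp add: total_deriv_iter_def)
  also have "\<dots> = total_deriv (mass_action R sr tg k) (peval (K + 2*l) ((lieC R sr tg k ^^ l) c))"
    using Suc by simp
  also have "\<dots> = peval (K + 2*l + 2) ((lieC R sr tg k ^^ Suc l) c)"
    by (rule ext, simp add: total_deriv_peval[OF fR a2 b])
  finally show ?case using bnd_lieC[OF a2 b, where R=R and tg=tg and k=k] by (simp add: add.assoc)
qed

lemma digits_unique:
  fixes B :: nat assumes B: "0 < B"
  shows "(\<forall>i<n. d i < B) \<Longrightarrow> (\<forall>i<n. d' i < B) \<Longrightarrow> (\<Sum>i<n. d i * B^i) = (\<Sum>i<n. d' i * B^i) \<Longrightarrow> \<forall>i<n. d i = d' i"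
proof (induction n arbitrary: d d')
  case 0 then show ?case by simp
next
  case (Suc n)
  have e: "(\<Sum>i<Suc n. f i * B^i) = f 0 + B * (\<Sum>i<n. f (Suc i) * B^i)" for f :: "nat \<Rightarrow> nat"
    unfolding sum.lessThan_Suc_shift by (simp add: sum_distrib_left mult_ac del: sum.lessThan_Suc)
  define X where "X = (\<Sum>i<n. d (Suc i) * B^i)"
  define X' where "X' = (\<Sum>i<n. d' (Suc i) * B^i)"
  have eq: "d 0 + B * X = d' 0 + B * X'"
    using Suc.prems(3) unfolding e X_def X'_def .
  have d0: "d 0 < B" "d' 0 < B" using Suc.prems(1,2) by auto
  have m: "(a + B * Z) mod B = a" "(a + B * Z) div B = Z" if "a < B" for a Z :: nat
    using that B by auto
  have h0: "d 0 = d' 0"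
  proof -
    have "(d 0 + B * X) mod B = (d' 0 + B * X') mod B" using eq by simp
    thus ?thesis by (simp only: m(1)[OF d0(1)] m(1)[OF d0(2)])
  qed
  have "X = X'"
  proof -
    have "(d 0 + B * X) div B = (d' 0 + B * X') div B" using eq by simp
    thus ?thesis by (simp only: m(2)[OF d0(1)] m(2)[OF d0(2)])
  qed
  moreover have "\<forall>i<n. d (Suc i) < B" "\<forall>i<n. d' (Suc i) < B" using Suc.prems(1,2) by auto
  ultimately have "\<forall>i<n. d (Suc i) = d' (Suc i)"
    using Suc.IH[of "\<lambda>i. d (Suc i)" "\<lambda>i. d' (Suc i)"] unfolding X_def X'_def by blast
  show ?case
  proof (intro allI impI)
    fix i assume "i < Suc n"
    show "d i = d' i"
    proof (cases i)
      case 0 thus ?thesis using h0 by simp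
    next
      case (Suc j) thus ?thesis using \<open>i < Suc n\<close> \<open>\<forall>i<n. d (Suc i) = d' (Suc i)\<close> by simp
    qed
  qed
qed

lemma peval_unique0:
  fixes e :: "('s::finite) complex \<Rightarrow> real"
  assumes z: "\<And>x. (\<Sum>b\<in>Bnd K. e b * monom b x) = 0" and b: "b \<in> Bnd K"
  shows "e b = 0"
proof -
  obtain idx :: "'s \<Rightarrow> nat" where bij: "bij_betw idx UNIV {0..<card (UNIV::'s set)}"
    using ex_bij_betw_finite_nat[of "UNIV::'s set"] by auto
  define n where "n = card (UNIV :: 's set)"
  define B where "B = K + 1"
  define inv where "inv = the_inv_into UNIV idx"
  have inj: "inj idx" using bij by (simp add: bij_betw_def)
  have invi: "inv (idx t) = t" for t unfolding inv_def using inj by (simp add: the_inv_into_f_f)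
  define enc where "enc b = (\<Sum>t\<in>UNIV. b t * B ^ idx t)" for b :: "'s complex"
  have enc_alt: "enc b = (\<Sum>i<n. b (inv i) * B^i)" for b
  proof -
    have "enc b = (\<Sum>i\<in>idx ` UNIV. b (inv i) * B^i)"
      unfolding enc_def by (subst sum.reindex[OF inj]) (simp add: invi)
    also have "idx ` UNIV = {..<n}" using bij unfolding n_def by (auto simp: bij_betw_def)
    finally show ?thesis .
  qed
  have rng: "i < n \<Longrightarrow> i \<in> idx ` UNIV" for i using bij unfolding n_def by (auto simp: bij_betw_def)
  have enc_inj: "inj_on enc (Bnd K)"
  proof (rule inj_onI)
    fix b1 b2 assume b1: "b1 \<in> Bnd K" and b2: "b2 \<in> Bnd K" and eq: "enc b1 = enc b2"
    have l1: "\<forall>i<n. b1 (inv i) < B" using b1 unfolding Bnd_def B_def by (simp add: less_Suc_eq_le)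
    have l2: "\<forall>i<n. b2 (inv i) < B" using b2 unfolding Bnd_def B_def by (simp add: less_Suc_eq_le)
    have l3: "(\<Sum>i<n. b1 (inv i) * B^i) = (\<Sum>i<n. b2 (inv i) * B^i)" using eq unfolding enc_alt .
    have B0: "0 < B" unfolding B_def by simp
    have all: "\<forall>i<n. b1 (inv i) = b2 (inv i)"
      by (rule digits_unique[OF B0 l1 l2 l3])
    show "b1 = b2"
    proof
      fix t
      have "idx t < n" using bij unfolding n_def bij_betw_def by auto
      hence "b1 (inv (idx t)) = b2 (inv (idx t))" using all by blast
      thus "b1 t = b2 t" by (simp only: invi)
    qed
  qed
  define M where "M = Max (enc ` Bnd K)"
  have fin: "finite (Bnd K :: 's complex set)" by (rule finite_Bnd)
  have encM: "enc b' \<le> M" if "b' \<in> Bnd K" for b' unfolding M_def using fin that by auto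
  define cf where "cf m = (if m \<in> enc ` Bnd K then e (the_inv_into (Bnd K) enc m) else 0)" for m
  have "(\<Sum>m\<le>M. cf m * z ^ m) = 0" for z :: real
  proof -
    define x where "x = (\<lambda>t. z ^ (B ^ idx t))"
    have mx: "monom b' x = z ^ enc b'" for b'
    proof -
      have "monom b' x = (\<Prod>t\<in>UNIV. z ^ (b' t * B ^ idx t))"
        unfolding monom_def x_def by (rule prod.cong[OF refl], simp only: power_mult[symmetric] mult.commute[of "b' _"])
      also have "\<dots> = z ^ enc b'" unfolding enc_def by (simp add: power_sum)
      finally show ?thesis .
    qed
    have "(\<Sum>m\<le>M. cf m * z ^ m) = (\<Sum>m\<in>enc ` Bnd K. cf m * z ^ m)"
      by (rule sum.mono_neutral_right) (use encM fin in \<open>auto simp: cf_def\<close>)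
    also have "\<dots> = (\<Sum>b'\<in>Bnd K. cf (enc b') * z ^ enc b')" by (simp add: sum.reindex[OF enc_inj] o_def)
    also have "\<dots> = (\<Sum>b'\<in>Bnd K. e b' * monom b' x)"
      by (rule sum.cong[OF refl]) (simp add: cf_def mx the_inv_into_f_f[OF enc_inj])
    also have "\<dots> = 0" by (rule z)
    finally show ?thesis .
  qed
  hence "\<forall>m\<le>M. cf m = 0" using polyfun_eq_0 by blast
  hence "cf (enc b) = 0" using encM[OF b] by blast
  thus ?thesis using b by (simp add: cf_def the_inv_into_f_f[OF enc_inj])
qed

lemma peval_unique:
  fixes c d :: "('s::finite) complex \<Rightarrow> real"
  assumes "bnd K c" "bnd K d" "peval K c = peval K d"
  shows "c = d"
proof
  fix b
  have z: "(\<Sum>b\<in>Bnd K. (c b - d b) * monom b x) = 0" for x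
    using fun_cong[OF assms(3), of x] unfolding peval_def by (simp add: left_diff_distrib sum_subtractf)
  show "c b = d b"
  proof (cases "b \<in> Bnd K")
    case True thus ?thesis using peval_unique0[OF z True] by simp
  next
    case False
    have "c b = 0" using assms(1) False unfolding bnd_def by blast
    moreover have "d b = 0" using assms(2) False unfolding bnd_def by blast
    ultimately show ?thesis by simp
  qed
qed


lemma cpx2_comm: "cpx2 a b = cpx2 b a"
  by (auto simp: cpx2_def fun_eq_iff)

lemma cpx2_pos: "0 < cpx2 a b t \<longleftrightarrow> t = a \<or> t = b"
  by (simp add: cpx2_def)

lemma cpx2_eq_iff: "cpx2 a b = cpx2 c d \<longleftrightarrow> (a = c \<and> b = d) \<or> (a = d \<and> b = c)"
proof
  assume e: "cpx2 a b = cpx2 c d"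
  have p: "0 < cpx2 a b t \<longleftrightarrow> 0 < cpx2 c d t" for t using e by simp
  have 1: "a = c \<or> a = d" using p[of a] by (simp add: cpx2_pos)
  have 2: "b = c \<or> b = d" using p[of b] by (simp add: cpx2_pos)
  have 3: "c = a \<or> c = b" using p[of c] by (simp add: cpx2_pos)
  have 4: "d = a \<or> d = b" using p[of d] by (simp add: cpx2_pos)
  show "(a = c \<and> b = d) \<or> (a = d \<and> b = c)"
  proof (cases "a = b")
    case True
    hence "c = a" "d = a" using 3 4 by auto
    thus ?thesis using True by simp
  next
    case False
    thus ?thesis using 1 2 by auto
  qed
next
  assume "(a = c \<and> b = d) \<or> (a = d \<and> b = c)"
  thus "cpx2 a b = cpx2 c d" using cpx2_comm by auto
qed

lemma cpx1_pos: "0 < cpx1 a t \<longleftrightarrow> t = a"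
  by (simp add: cpx1_def)

lemma cpx1_ne_cpx2: "cpx1 a \<noteq> cpx2 b c"
proof
  assume e: "cpx1 a = cpx2 b c"
  have "0 < cpx2 b c b" "0 < cpx2 b c c" by (simp_all add: cpx2_pos)
  hence "b = a" "c = a" using e cpx1_pos by metis+
  hence "cpx2 b c a = 2" by (simp add: cpx2_def)
  moreover have "cpx1 a a = 1" by (simp add: cpx1_def)
  ultimately show False using e by simp
qed

lemma cpx1_eq_iff: "cpx1 a = cpx1 b \<longleftrightarrow> a = b"
proof
  assume e: "cpx1 a = cpx1 b"
  have "0 < cpx1 a a" by (simp add: cpx1_pos)
  hence "0 < cpx1 b a" using e by simp
  thus "a = b" by (simp add: cpx1_pos)
qed simp

locale net =
  fixes N :: nat and L :: "nat \<Rightarrow> nat" and Y Yt :: "nat \<Rightarrow> 's::finite" and S U V :: "nat \<Rightarrow> nat \<Rightarrow> 's"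
  assumes h1: "H1 N L Y Yt S U V" and h2: "H2 N L Y Yt S U V"
begin

abbreviation "srcF \<equiv> src Y Yt S U V"
abbreviation "tgtF \<equiv> tgt Y Yt S U V"
abbreviation "R \<equiv> labs N L"

lemma Lpos: "i \<in> {1..N} \<Longrightarrow> 1 \<le> L i"
  using h1 by (auto simp: H1_def)

lemma inj_int: "inj_on (\<lambda>(b, i, j). if b then V i j else U i j) {(b, i, j). i \<in> {1..N} \<and> j \<in> {1..L i}}"
  using h1 by (simp add: H1_def)

lemma UU: "i \<in> {1..N} \<Longrightarrow> i' \<in> {1..N} \<Longrightarrow> j \<in> {1..L i} \<Longrightarrow> j' \<in> {1..L i'} \<Longrightarrow>
   U i j = U i' j' \<longleftrightarrow> i = i' \<and> j = j'"
  using inj_onD[OF inj_int, of "(False,i,j)" "(False,i',j')"] by auto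

lemma VV: "i \<in> {1..N} \<Longrightarrow> i' \<in> {1..N} \<Longrightarrow> j \<in> {1..L i} \<Longrightarrow> j' \<in> {1..L i'} \<Longrightarrow>
   V i j = V i' j' \<longleftrightarrow> i = i' \<and> j = j'"
  using inj_onD[OF inj_int, of "(True,i,j)" "(True,i',j')"] by auto

lemma UV: "i \<in> {1..N} \<Longrightarrow> i' \<in> {1..N} \<Longrightarrow> j \<in> {1..L i} \<Longrightarrow> j' \<in> {1..L i'} \<Longrightarrow>
   U i j \<noteq> V i' j'"
  using inj_onD[OF inj_int, of "(False,i,j)" "(True,i',j')"] by auto

lemma disj: "intermediates N L U V \<inter> nonintermediates N L Y Yt S = {}"
  using h1 by (simp add: H1_def)

lemma int_U: "i \<in> {1..N} \<Longrightarrow> j \<in> {1..L i} \<Longrightarrow> U i j \<in> intermediates N L U V"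
  unfolding intermediates_def by blast
lemma int_V: "i \<in> {1..N} \<Longrightarrow> j \<in> {1..L i} \<Longrightarrow> V i j \<in> intermediates N L U V"
  unfolding intermediates_def by blast
lemma ni_Y: "i \<in> {1..N} \<Longrightarrow> Y i \<in> nonintermediates N L Y Yt S"
  unfolding nonintermediates_def by blast
lemma ni_Yt: "i \<in> {1..N} \<Longrightarrow> Yt i \<in> nonintermediates N L Y Yt S"
  unfolding nonintermediates_def by blast
lemma ni_S: "i \<in> {1..N} \<Longrightarrow> m \<in> {0..L i} \<Longrightarrow> S i m \<in> nonintermediates N L Y Yt S"
  unfolding nonintermediates_def by blast

lemma int_ni: "w \<in> intermediates N L U V \<Longrightarrow> w \<notin> nonintermediates N L Y Yt S"
  using disj by blast

lemma inj_S: "i \<in> {1..N} \<Longrightarrow> a \<in> {0..L i} \<Longrightarrow> b \<in> {0..L i} \<Longrightarrow> S i a = S i b \<longleftrightarrow> a = b"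
  using h1 unfolding H1_def by (meson inj_on_eq_iff)

lemma Y_S: "i \<in> {1..N} \<Longrightarrow> a \<in> {0..L i} \<Longrightarrow> Y i \<noteq> S i a"
  using h1 unfolding H1_def by blast
lemma Yt_S: "i \<in> {1..N} \<Longrightarrow> a \<in> {0..L i} \<Longrightarrow> Yt i \<noteq> S i a"
  using h1 unfolding H1_def by blast

lemma comp_unique: "c \<in> UNIV \<times> {1..N} \<Longrightarrow> c' \<in> UNIV \<times> {1..N} \<Longrightarrow>
   x \<in> comp_complexes L Y Yt S U V c \<Longrightarrow> x \<in> comp_complexes L Y Yt S U V c' \<Longrightarrow> c = c'"
  using h1 unfolding H1_def by blast

lemma cYY: "i \<in> {1..N} \<Longrightarrow> i' \<in> {1..N} \<Longrightarrow> a \<in> {0..L i} \<Longrightarrow> b \<in> {0..L i'} \<Longrightarrow>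
   cpx2 (Y i) (S i a) = cpx2 (Y i') (S i' b) \<Longrightarrow> i = i' \<and> a = b"
proof -
  assume i: "i \<in> {1..N}" and i': "i' \<in> {1..N}" and a: "a \<in> {0..L i}" and b: "b \<in> {0..L i'}"
    and e: "cpx2 (Y i) (S i a) = cpx2 (Y i') (S i' b)"
  have "cpx2 (Y i) (S i a) \<in> comp_complexes L Y Yt S U V (False, i)" using a by (auto simp: comp_complexes_def)
  moreover have "cpx2 (Y i) (S i a) \<in> comp_complexes L Y Yt S U V (False, i')" using b e by (auto simp: comp_complexes_def)
  ultimately have ii: "i = i'" using comp_unique[of "(False,i)" "(False,i')"] i i' by auto
  hence "S i a = S i b \<or> (Y i = S i b \<and> S i a = Y i)" using e by (auto simp: cpx2_eq_iff)
  thus ?thesis using ii inj_S[OF i a] b Y_S[OF i a] by auto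
qed

lemma cTT: "i \<in> {1..N} \<Longrightarrow> i' \<in> {1..N} \<Longrightarrow> a \<in> {0..L i} \<Longrightarrow> b \<in> {0..L i'} \<Longrightarrow>
   cpx2 (Yt i) (S i a) = cpx2 (Yt i') (S i' b) \<Longrightarrow> i = i' \<and> a = b"
proof -
  assume i: "i \<in> {1..N}" and i': "i' \<in> {1..N}" and a: "a \<in> {0..L i}" and b: "b \<in> {0..L i'}"
    and e: "cpx2 (Yt i) (S i a) = cpx2 (Yt i') (S i' b)"
  have "cpx2 (Yt i) (S i a) \<in> comp_complexes L Y Yt S U V (True, i)" using a by (auto simp: comp_complexes_def)
  moreover have "cpx2 (Yt i) (S i a) \<in> comp_complexes L Y Yt S U V (True, i')" using b e by (auto simp: comp_complexes_def)
  ultimately have ii: "i = i'" using comp_unique[of "(True,i)" "(True,i')"] i i' by auto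
  hence "S i a = S i b \<or> (Yt i = S i b \<and> S i a = Yt i)" using e by (auto simp: cpx2_eq_iff)
  thus ?thesis using ii inj_S[OF i a] b Yt_S[OF i a] by auto
qed

lemma cYT: "i \<in> {1..N} \<Longrightarrow> i' \<in> {1..N} \<Longrightarrow> a \<in> {0..L i} \<Longrightarrow> b \<in> {0..L i'} \<Longrightarrow>
   cpx2 (Y i) (S i a) \<noteq> cpx2 (Yt i') (S i' b)"
proof
  assume i: "i \<in> {1..N}" and i': "i' \<in> {1..N}" and a: "a \<in> {0..L i}" and b: "b \<in> {0..L i'}"
    and e: "cpx2 (Y i) (S i a) = cpx2 (Yt i') (S i' b)"
  have "cpx2 (Y i) (S i a) \<in> comp_complexes L Y Yt S U V (False, i)" using a by (auto simp: comp_complexes_def)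
  moreover have "cpx2 (Y i) (S i a) \<in> comp_complexes L Y Yt S U V (True, i')" using b e by (auto simp: comp_complexes_def)
  ultimately show False using comp_unique[of "(False,i)" "(True,i')"] i i' by auto
qed

lemma Y_Yt: "i \<in> {1..N} \<Longrightarrow> Y i \<noteq> Yt i"
  using cYT[of i i 0 0] by auto

definition pcl :: "'s \<Rightarrow> nat" where "pcl = (SOME p. \<forall>i\<in>{1..N}. (\<forall>a\<in>{0..L i}. p (S i a) = p (S i 0)) \<and> p (Y i) \<noteq> p (S i 0) \<and> p (Yt i) \<noteq> p (S i 0))"

lemma pcl: assumes i0: "i \<in> {1..N}" shows "(\<forall>a\<in>{0..L i}. pcl (S i a) = pcl (S i 0)) \<and> pcl (Y i) \<noteq> pcl (S i 0) \<and> pcl (Yt i) \<noteq> pcl (S i 0)"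
proof -
  obtain M :: nat and p :: "'s \<Rightarrow> nat" where hp: "let Sp = intermediates N L U V \<union> nonintermediates N L Y Yt S in
        2 \<le> M \<and> (\<forall>s\<in>Sp. p s \<le> M) \<and> (\<forall>\<alpha>\<le>M. \<exists>s\<in>Sp. p s = \<alpha>) \<and>
        (\<forall>s\<in>Sp. p s = 0 \<longleftrightarrow> s \<in> intermediates N L U V) \<and>
        (\<forall>i\<in>{1..N}. \<forall>j\<in>{1..L i}.
           (\<exists>\<alpha>\<ge>1. (\<forall>j'\<in>{0..L i}. p (S i j') = \<alpha>) \<and> p (Y i) \<noteq> \<alpha>) \<and>
           (\<exists>\<alpha>\<ge>1. (\<forall>j'\<in>{0..L i}. p (S i j') = \<alpha>) \<and> p (Yt i) \<noteq> \<alpha>))"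
    using h2 unfolding H2_def by blast
  have H: "\<forall>i\<in>{1..N}. \<forall>j\<in>{1..L i}.
           (\<exists>\<alpha>\<ge>1. (\<forall>j'\<in>{0..L i}. p (S i j') = \<alpha>) \<and> p (Y i) \<noteq> \<alpha>) \<and>
           (\<exists>\<alpha>\<ge>1. (\<forall>j'\<in>{0..L i}. p (S i j') = \<alpha>) \<and> p (Yt i) \<noteq> \<alpha>)"
    using hp[unfolded Let_def, THEN conjunct2, THEN conjunct2, THEN conjunct2, THEN conjunct2] .
  have "\<forall>i\<in>{1..N}. (\<forall>a\<in>{0..L i}. p (S i a) = p (S i 0)) \<and> p (Y i) \<noteq> p (S i 0) \<and> p (Yt i) \<noteq> p (S i 0)"
  proof
    fix i assume i: "i \<in> {1..N}"
    hence "1 \<in> {1..L i}" using Lpos by auto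
    then obtain \<alpha> \<beta> where "\<forall>j'\<in>{0..L i}. p (S i j') = \<alpha>" "p (Y i) \<noteq> \<alpha>"
      "\<forall>j'\<in>{0..L i}. p (S i j') = \<beta>" "p (Yt i) \<noteq> \<beta>" using H i by blast
    thus "(\<forall>a\<in>{0..L i}. p (S i a) = p (S i 0)) \<and> p (Y i) \<noteq> p (S i 0) \<and> p (Yt i) \<noteq> p (S i 0)" by auto
  qed
  hence ex: "\<exists>p::'s\<Rightarrow>nat. \<forall>i\<in>{1..N}. (\<forall>a\<in>{0..L i}. p (S i a) = p (S i 0)) \<and> p (Y i) \<noteq> p (S i 0) \<and> p (Yt i) \<noteq> p (S i 0)" by blast
  have "\<forall>i\<in>{1..N}. (\<forall>a\<in>{0..L i}. pcl (S i a) = pcl (S i 0)) \<and> pcl (Y i) \<noteq> pcl (S i 0) \<and> pcl (Yt i) \<noteq> pcl (S i 0)"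
    unfolding pcl_def by (rule someI_ex[OF ex])
  thus ?thesis using i0 by blast
qed

lemma cls_Y:
  assumes i: "i \<in> {1..N}" and i': "i' \<in> {1..N}" and a: "a \<in> {0..L i}" and b: "b \<in> {0..L i}" and c: "c \<in> {0..L i'}"
    and e1: "S i a = Y i'" and e2: "S i b = S i' c"
  shows False
proof -
  have q1: "pcl (S i a) = pcl (S i 0)" "pcl (S i b) = pcl (S i 0)" using pcl[OF i] a b by blast+
  have q2: "pcl (S i' c) = pcl (S i' 0)" "pcl (Y i') \<noteq> pcl (S i' 0)" using pcl[OF i'] c by blast+
  have "pcl (Y i') = pcl (S i a)" using e1 by (rule arg_cong[OF sym])
  also have "\<dots> = pcl (S i b)" using q1 by (rule trans[OF _ sym]) 
  also have "\<dots> = pcl (S i' c)" using e2 by (rule arg_cong)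
  also have "\<dots> = pcl (S i' 0)" by (rule q2(1))
  finally show False using q2(2) by contradiction
qed

lemma cls_Yt:
  assumes i: "i \<in> {1..N}" and i': "i' \<in> {1..N}" and a: "a \<in> {0..L i}" and b: "b \<in> {0..L i}" and c: "c \<in> {0..L i'}"
    and e1: "S i a = Yt i'" and e2: "S i b = S i' c"
  shows False
proof -
  have q1: "pcl (S i a) = pcl (S i 0)" "pcl (S i b) = pcl (S i 0)" using pcl[OF i] a b by blast+
  have q2: "pcl (S i' c) = pcl (S i' 0)" "pcl (Yt i') \<noteq> pcl (S i' 0)" using pcl[OF i'] c by blast+
  have "pcl (Yt i') = pcl (S i a)" using e1 by (rule arg_cong[OF sym])
  also have "\<dots> = pcl (S i b)" using q1 by (rule trans[OF _ sym]) 
  also have "\<dots> = pcl (S i' c)" using e2 by (rule arg_cong)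
  also have "\<dots> = pcl (S i' 0)" by (rule q2(1))
  finally show False using q2(2) by contradiction
qed

lemma labs_cases:
  assumes "r \<in> labs N L"
  obtains (A) i j where "i \<in> {1..N}" "j \<in> {1..L i}" "r = Ra i j"
   | (B) i j where "i \<in> {1..N}" "j \<in> {1..L i}" "r = Rb i j"
   | (C) i j where "i \<in> {1..N}" "j \<in> {1..L i}" "r = Rc i j"
   | (TA) i j where "i \<in> {1..N}" "j \<in> {1..L i}" "r = Rta i j"
   | (TB) i j where "i \<in> {1..N}" "j \<in> {1..L i}" "r = Rtb i j"
   | (TC) i j where "i \<in> {1..N}" "j \<in> {1..L i}" "r = Rtc i j"
  using assms unfolding labs_def by blast

lemma finite_labs: "finite (labs N L)"
  unfolding labs_def by auto

lemma src_le2: "srcF r t \<le> 2"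
  by (cases r) (auto simp: cpx1_def cpx2_def)

end


lemma le_cpx1: "le_c (cpx1 a) g \<longleftrightarrow> 0 < g a"
  unfolding le_c_def cpx1_def by (auto simp: Suc_le_eq)

lemma le_cpx2: "a \<noteq> b \<Longrightarrow> le_c (cpx2 a b) g \<longleftrightarrow> 0 < g a \<and> 0 < g b"
  unfolding le_c_def cpx2_def by (auto simp: Suc_le_eq)

lemma sum_cpx1: "(\<Sum>s\<in>UNIV. real (cpx1 (a::'a::finite) s) * h s) = (h a :: real)"
proof -
  have "(\<Sum>s\<in>UNIV. real (cpx1 a s) * h s) = (\<Sum>s\<in>UNIV. if s = a then h s else 0)"
    by (rule sum.cong) (auto simp: cpx1_def)
  also have "\<dots> = h a" by (simp add: sum.delta)
  finally show ?thesis .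
qed

lemma sum_cpx2: "(\<Sum>s\<in>UNIV. real (cpx2 (a::'a::finite) b s) * h s) = (h a + h b :: real)"
proof -
  have "(\<Sum>s\<in>UNIV. real (cpx2 a b s) * h s) = (\<Sum>s\<in>UNIV. real (cpx1 a s) * h s) + (\<Sum>s\<in>UNIV. real (cpx1 b s) * h s)"
    unfolding sum.distrib[symmetric] by (rule sum.cong) (auto simp: cpx1_def cpx2_def algebra_simps)
  thus ?thesis by (simp add: sum_cpx1)
qed

lemma sum_delta_split: "(\<Sum>s\<in>UNIV. (real (tg s) - real (sr s)) * h s) =
   (\<Sum>s\<in>UNIV. real (tg s) * h s) - (\<Sum>s\<in>UNIV. real (sr s) * (h s :: real))"
  by (simp add: left_diff_distrib sum_subtractf)

context net begin

lemma src_shape: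
  assumes "r \<in> R"
  shows "(\<exists>w. srcF r = cpx1 w \<and> w \<in> intermediates N L U V) \<or>
         (\<exists>a b. srcF r = cpx2 a b \<and> a \<noteq> b \<and> a \<in> nonintermediates N L Y Yt S \<and> b \<in> nonintermediates N L Y Yt S)"
  using assms
proof (cases rule: labs_cases)
  case (A i j)
  have e: "srcF r = cpx2 (Y i) (S i (j-1))" using A by simp
  have m: "j - 1 \<in> {0..L i}" using A by auto
  show ?thesis using e Y_S[OF A(1) m] ni_Y[OF A(1)] ni_S[OF A(1) m] by blast
next
  case (B i j) thus ?thesis using int_U by auto
next
  case (C i j) thus ?thesis using int_U by auto
next
  case (TA i j)
  have e: "srcF r = cpx2 (Yt i) (S i j)" using TA by simp
  have m: "j \<in> {0..L i}" using TA by auto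
  show ?thesis using e Yt_S[OF TA(1) m] ni_Yt[OF TA(1)] ni_S[OF TA(1) m] by blast
next
  case (TB i j) thus ?thesis using int_V by auto
next
  case (TC i j) thus ?thesis using int_V by auto
qed

lemma lie_enum:
  fixes g :: "'s complex"
  assumes A: "A \<subseteq> R" and h1: "\<And>r. r \<in> R \<Longrightarrow> le_c (srcF r) g \<Longrightarrow> r \<in> A" and h2: "\<And>r. r \<in> A \<Longrightarrow> le_c (srcF r) g"
  shows "lieC R srcF tgtF k c g = (\<Sum>r\<in>A. k r * (\<Sum>s\<in>UNIV. (real (tgtF r s) - real (srcF r s)) *
            ((real (g s) + 1 - real (srcF r s)) * c (sub_add g (srcF r) s))))"
proof -
  have "lieC R srcF tgtF k c g = (\<Sum>r\<in>A. if le_c (srcF r) g then k r * (\<Sum>s\<in>UNIV. (real (tgtF r s) - real (srcF r s)) *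
            ((real (g s) + 1 - real (srcF r s)) * c (sub_add g (srcF r) s))) else 0)"
    unfolding lieC_def by (rule sum.mono_neutral_right[OF finite_labs A]) (use h1 in auto)
  also have "\<dots> = (\<Sum>r\<in>A. k r * (\<Sum>s\<in>UNIV. (real (tgtF r s) - real (srcF r s)) *
            ((real (g s) + 1 - real (srcF r s)) * c (sub_add g (srcF r) s))))"
    by (rule sum.cong[OF refl]) (simp add: h2)
  finally show ?thesis .
qed

end

locale chain = net N L Y Yt S U V
  for N :: nat and L :: "nat \<Rightarrow> nat" and Y Yt :: "nat \<Rightarrow> 's::finite" and S U V :: "nat \<Rightarrow> nat \<Rightarrow> 's" +
  fixes i :: nat
  assumes i_in: "i \<in> {1..N}"
begin

definition c0 :: "'s complex \<Rightarrow> real" where "c0 g = (if g = cpx1 (S i (L i)) then 1 else 0)"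
definition co :: "(rlab \<Rightarrow> real) \<Rightarrow> nat \<Rightarrow> 's complex \<Rightarrow> real" where
  "co k n = (lieC R srcF tgtF k ^^ n) c0"
definition ymono :: "nat \<Rightarrow> 's \<Rightarrow> 's complex" where
  "ymono m t = (\<lambda>\<tau>. (if \<tau> = Y i then m else 0) + (if \<tau> = t then 1 else 0))"
definition ypow :: "nat \<Rightarrow> 's complex" where
  "ypow m = (\<lambda>\<tau>. if \<tau> = Y i then m else 0)"

lemma co_0: "co k 0 = c0" by (simp add: co_def)
lemma co_Suc: "co k (Suc n) = lieC R srcF tgtF k (co k n)" by (simp add: co_def)

lemma LLpos: "1 \<le> L i" using Lpos[OF i_in] .

lemma YS: "j \<in> {0..L i} \<Longrightarrow> S i j \<noteq> Y i" using Y_S[OF i_in] by metis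
lemma YtS: "j \<in> {0..L i} \<Longrightarrow> S i j \<noteq> Yt i" using Yt_S[OF i_in] by metis
lemma YYt: "Yt i \<noteq> Y i" using Y_Yt[OF i_in] by metis
lemma U_ni: "i' \<in> {1..N} \<Longrightarrow> j' \<in> {1..L i'} \<Longrightarrow> x \<in> nonintermediates N L Y Yt S \<Longrightarrow> U i' j' \<noteq> x"
  using int_ni[OF int_U] by metis
lemma V_ni: "i' \<in> {1..N} \<Longrightarrow> j' \<in> {1..L i'} \<Longrightarrow> x \<in> nonintermediates N L Y Yt S \<Longrightarrow> V i' j' \<noteq> x"
  using int_ni[OF int_V] by metis

lemma ymono_pos: "0 < ymono m t \<tau> \<longleftrightarrow> (\<tau> = Y i \<and> 0 < m) \<or> \<tau> = t"
  by (simp add: ymono_def)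
lemma ymono_y: "ymono m (Y i) = ypow (Suc m)"
  by (simp add: ymono_def ypow_def fun_eq_iff)
lemma ypow_pos: "0 < ypow m \<tau> \<longleftrightarrow> \<tau> = Y i \<and> 0 < m"
  by (simp add: ypow_def)

lemma SA1: "t \<noteq> Y i \<Longrightarrow> sub_add (ymono m t) (cpx1 t) s = ymono m s"
  by (simp add: sub_add_def ymono_def cpx1_def fun_eq_iff)
lemma SA2: "t \<noteq> Y i \<Longrightarrow> sub_add (ymono m t) (cpx2 (Y i) t) s = ymono (m - 1) s"
  by (simp add: sub_add_def ymono_def cpx2_def fun_eq_iff)

lemma no_le_ypow: "r \<in> R \<Longrightarrow> \<not> le_c (srcF r) (ypow m)"
proof
  assume r: "r \<in> R" and le: "le_c (srcF r) (ypow m)"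
  from src_shape[OF r] show False
  proof (elim disjE exE conjE)
    fix w assume e: "srcF r = cpx1 w" and w: "w \<in> intermediates N L U V"
    have "0 < ypow m w" using le e by (simp add: le_cpx1)
    hence "w = Y i" by (simp add: ypow_pos)
    thus False using int_ni[OF w] ni_Y[OF i_in] by simp
  next
    fix a b assume e: "srcF r = cpx2 a b" and ab: "a \<noteq> b"
    have "0 < ypow m a" "0 < ypow m b" using le e ab by (simp_all add: le_cpx2)
    thus False using ab by (simp add: ypow_pos)
  qed
qed

lemma co_ypow: "co k n (ypow m) = 0"
proof (cases n)
  case 0
  have "ypow m (S i (L i)) = 0" using YS[of "L i"] by (simp add: ypow_def)
  moreover have "cpx1 (S i (L i)) (S i (L i)) = 1" by (simp add: cpx1_def)
  ultimately have "ypow m \<noteq> cpx1 (S i (L i))" by auto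
  thus ?thesis using 0 by (simp add: co_0 c0_def)
next
  case (Suc n')
  have "lieC R srcF tgtF k (co k n') (ypow m) = (\<Sum>r\<in>{}. k r * (\<Sum>s\<in>UNIV. (real (tgtF r s) - real (srcF r s)) *
            ((real (ypow m s) + 1 - real (srcF r s)) * co k n' (sub_add (ypow m) (srcF r) s))))"
    by (rule lie_enum) (use no_le_ypow in auto)
  thus ?thesis using Suc by (simp add: co_Suc)
qed

lemma co_ymono_y: "co k n (ymono m (Y i)) = 0"
  by (simp add: ymono_y co_ypow)

lemma YL:
  assumes r: "r \<in> R" and t: "t \<noteq> Y i" and le: "le_c (srcF r) (ymono m t)"
  shows "srcF r = cpx1 t \<or> (0 < m \<and> srcF r = cpx2 (Y i) t)"
  using src_shape[OF r]
proof (elim disjE exE conjE)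
  fix w assume e: "srcF r = cpx1 w" and w: "w \<in> intermediates N L U V"
  have "0 < ymono m t w" using le e by (simp add: le_cpx1)
  hence "w = Y i \<or> w = t" by (auto simp: ymono_pos)
  moreover have "w \<noteq> Y i" using int_ni[OF w] ni_Y[OF i_in] by metis
  ultimately show ?thesis using e by simp
next
  fix a b assume e: "srcF r = cpx2 a b" and ab: "a \<noteq> b"
  have "0 < ymono m t a" "0 < ymono m t b" using le e ab by (simp_all add: le_cpx2)
  hence a: "(a = Y i \<and> 0 < m) \<or> a = t" and b: "(b = Y i \<and> 0 < m) \<or> b = t" by (simp_all add: ymono_pos)
  have "(a = Y i \<and> b = t \<and> 0 < m) \<or> (a = t \<and> b = Y i \<and> 0 < m)" using a b ab by auto
  thus ?thesis using e cpx2_comm by metis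
qed

end


context chain begin

definition Dead :: "'s set" where
  "Dead = {w. (\<exists>i'\<in>{1..N}. \<exists>j'\<in>{1..L i'}. w = U i' j' \<or> w = V i' j') \<and> (\<forall>q\<in>{1..L i}. w \<noteq> V i q) \<and>
              (\<forall>r\<in>R. tgtF r = cpx1 w \<longrightarrow> srcF r (Y i) = 0)}"

definition Ok :: "nat \<Rightarrow> 's \<Rightarrow> bool" where
  "Ok n t \<longleftrightarrow> (\<exists>j\<in>{0..L i}. t = S i j \<and> 2 * (L i - j) \<le> n) \<or>
              (\<exists>j\<in>{1..L i}. (t = U i j \<or> t = V i j) \<and> 2 * (L i - j) + 1 \<le> n) \<or> t \<in> Dead"

lemma Dead_int: "w \<in> Dead \<Longrightarrow> w \<in> intermediates N L U V"
  unfolding Dead_def using int_U int_V by blast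

lemma DeadU:
  assumes i': "i' \<in> {1..N}" and j': "j' \<in> {1..L i'}" and c1: "Y i' \<noteq> Y i" and c2: "S i' (j' - 1) \<noteq> Y i"
  shows "U i' j' \<in> Dead"
proof -
  have "\<forall>r\<in>R. tgtF r = cpx1 (U i' j') \<longrightarrow> srcF r (Y i) = 0"
  proof (intro ballI impI)
    fix r assume r: "r \<in> R" and e: "tgtF r = cpx1 (U i' j')"
    from r show "srcF r (Y i) = 0"
    proof (cases rule: labs_cases)
      case (A a b)
      hence "U a b = U i' j'" using e by (simp add: cpx1_eq_iff)
      hence "a = i' \<and> b = j'" using UU[OF A(1) i' A(2) j'] by simp
      thus ?thesis using A c1 c2 by (simp add: cpx2_def)
    next
      case (TA a b)
      hence "V a b = U i' j'" using e by (simp add: cpx1_eq_iff)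
      thus ?thesis using UV[OF i' TA(1) j' TA(2)] by metis
    qed (use e cpx1_ne_cpx2 in \<open>metis tgt.simps\<close>)+
  qed
  moreover have "\<forall>q\<in>{1..L i}. U i' j' \<noteq> V i q" using UV[OF i' i_in j'] by blast
  ultimately show ?thesis unfolding Dead_def using i' j' by blast
qed

lemma DeadV:
  assumes i': "i' \<in> {1..N}" and j': "j' \<in> {1..L i'}" and ii: "i' \<noteq> i" and c1: "Yt i' \<noteq> Y i" and c2: "S i' j' \<noteq> Y i"
  shows "V i' j' \<in> Dead"
proof -
  have "\<forall>r\<in>R. tgtF r = cpx1 (V i' j') \<longrightarrow> srcF r (Y i) = 0"
  proof (intro ballI impI)
    fix r assume r: "r \<in> R" and e: "tgtF r = cpx1 (V i' j')"
    from r show "srcF r (Y i) = 0"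
    proof (cases rule: labs_cases)
      case (A a b)
      hence "U a b = V i' j'" using e by (simp add: cpx1_eq_iff)
      thus ?thesis using UV[OF A(1) i' A(2) j'] by metis
    next
      case (TA a b)
      hence "V a b = V i' j'" using e by (simp add: cpx1_eq_iff)
      hence "a = i' \<and> b = j'" using VV[OF TA(1) i' TA(2) j'] by simp
      thus ?thesis using TA c1 c2 by (simp add: cpx2_def)
    qed (use e cpx1_ne_cpx2 in \<open>metis tgt.simps\<close>)+
  qed
  moreover have "\<forall>q\<in>{1..L i}. V i' j' \<noteq> V i q" using VV[OF i' i_in j'] ii by blast
  ultimately show ?thesis unfolding Dead_def using i' j' by blast
qed


lemma OkS: "j \<in> {0..L i} \<Longrightarrow> 2 * (L i - j) \<le> n \<Longrightarrow> Ok n (S i j)" unfolding Ok_def by blast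
lemma OkU: "j \<in> {1..L i} \<Longrightarrow> 2 * (L i - j) + 1 \<le> n \<Longrightarrow> Ok n (U i j)" unfolding Ok_def by blast
lemma OkV: "j \<in> {1..L i} \<Longrightarrow> 2 * (L i - j) + 1 \<le> n \<Longrightarrow> Ok n (V i j)" unfolding Ok_def by blast
lemma OkD: "w \<in> Dead \<Longrightarrow> Ok n w" unfolding Ok_def by blast

lemma Ok_cases:
  assumes "Ok n s"
  obtains (OS) j0 where "j0 \<in> {0..L i}" "s = S i j0" "2 * (L i - j0) \<le> n"
   | (OU) j0 where "j0 \<in> {1..L i}" "s = U i j0" "2 * (L i - j0) + 1 \<le> n"
   | (OV) j0 where "j0 \<in> {1..L i}" "s = V i j0" "2 * (L i - j0) + 1 \<le> n"
   | (OD) "s \<in> Dead"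
  using assms unfolding Ok_def by blast

lemma spec1: "tg s \<noteq> sr s \<Longrightarrow> tg = cpx1 a \<Longrightarrow> sr = cpx2 b c \<Longrightarrow> s = a \<or> s = b \<or> s = c"
  by (auto simp: cpx1_def cpx2_def split: if_splits)
lemma spec2: "tg s \<noteq> sr s \<Longrightarrow> tg = cpx2 b c \<Longrightarrow> sr = cpx1 a \<Longrightarrow> s = a \<or> s = b \<or> s = c"
  by (auto simp: cpx1_def cpx2_def split: if_splits)

lemma edge_A:
  assumes i': "i' \<in> {1..N}" and j': "j' \<in> {1..L i'}" and r: "r = Ra i' j'"
    and t: "t \<noteq> Y i" and s: "s \<noteq> Y i" and le: "le_c (srcF r) (ymono m t)"
    and d: "tgtF r s \<noteq> srcF r s" and ok: "Ok n s"
  shows "Ok (Suc n) t"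
proof -
  define m' where "m' = j' - 1"
  have m': "m' \<in> {0..L i'}" using j' by (auto simp: m'_def)
  have sr: "srcF r = cpx2 (Y i') (S i' m')" and tg: "tgtF r = cpx1 (U i' j')" using r by (simp_all add: m'_def)
  have rR: "r \<in> R" using r i' j' unfolding labs_def by blast
  have "srcF r = cpx1 t \<or> (0 < m \<and> srcF r = cpx2 (Y i) t)" by (rule YL[OF rR t le])
  hence e: "cpx2 (Y i') (S i' m') = cpx2 (Y i) t" using sr cpx1_ne_cpx2 by metis
  hence sub: "(Y i' = Y i \<and> S i' m' = t) \<or> (Y i' = t \<and> S i' m' = Y i)" by (simp add: cpx2_eq_iff)
  have sp: "s = U i' j' \<or> s = Y i' \<or> s = S i' m'" by (rule spec1[OF d tg sr])
  have st: "s = U i' j' \<or> s = t" using sp sub s by blast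
  have tni: "t \<in> nonintermediates N L Y Yt S" using sub ni_Y[OF i'] ni_S[OF i' m'] by metis
  have y1: "0 < srcF r (Y i)" using e sr by (simp add: cpx2_def)
  from ok show ?thesis
  proof (cases rule: Ok_cases)
    case (OS j0)
    have sU: "s \<noteq> U i' j'" using U_ni[OF i' j' ni_S[OF i_in OS(1)]] OS(2) by metis
    hence ts: "t = S i j0" using st OS(2) by metis
    from sub show ?thesis
    proof
      assume a: "Y i' = Y i \<and> S i' m' = t"
      have "2 * (L i - j0) \<le> Suc n" using OS(3) by simp
      thus ?thesis using OkS[OF OS(1)] ts by simp
    next
      assume a: "Y i' = t \<and> S i' m' = Y i"
      hence "cpx2 (Y i) (S i j0) = cpx2 (Y i') (S i' m')" using ts by (simp add: cpx2_eq_iff)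
      hence "i = i' \<and> j0 = m'" by (rule cYY[OF i_in i' OS(1) m'])
      hence "Y i = S i j0" using a ts by metis
      thus ?thesis using YS[OF OS(1)] by metis
    qed
  next
    case (OU j0)
    have "s \<noteq> t" using OU(2) U_ni[OF i_in OU(1) tni] by metis
    hence "U i j0 = U i' j'" using st OU(2) by simp
    hence ii: "i = i' \<and> j0 = j'" using UU[OF i_in i' OU(1) j'] by blast
    from sub show ?thesis
    proof
      assume a: "Y i' = Y i \<and> S i' m' = t"
      hence "t = S i' (j' - 1)" by (simp add: m'_def)
      hence "t = S i (j0 - 1)" using ii by metis
      moreover have "j0 - 1 \<in> {0..L i}" using OU(1) by auto
      moreover have "2 * (L i - (j0 - 1)) \<le> Suc n" using OU(1,3) by auto
      ultimately show ?thesis using OkS by metis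
    next
      assume a: "Y i' = t \<and> S i' m' = Y i"
      hence "S i m' = Y i" using ii by metis
      moreover have "m' \<in> {0..L i}" using m' ii by metis
      ultimately show ?thesis using YS by metis
    qed
  next
    case (OV j0)
    have "s \<noteq> t" using OV(2) V_ni[OF i_in OV(1) tni] by metis
    hence "V i j0 = U i' j'" using st OV(2) by simp
    thus ?thesis using UV[OF i' i_in j' OV(1)] by metis
  next
    case OD
    have "s \<noteq> t" using Dead_int[OF OD] int_ni tni by metis
    hence "s = U i' j'" using st by simp
    hence "srcF r (Y i) = 0" using OD rR tg unfolding Dead_def by blast
    thus ?thesis using y1 by simp
  qed
qed


lemma edge_BC:
  assumes i': "i' \<in> {1..N}" and j': "j' \<in> {1..L i'}" and jj: "jj = j' - 1 \<or> jj = j'"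
    and sr: "srcF r = cpx1 (U i' j')" and tg: "tgtF r = cpx2 (Y i') (S i' jj)"
    and rR: "r \<in> R"
    and t: "t \<noteq> Y i" and s: "s \<noteq> Y i" and le: "le_c (srcF r) (ymono m t)"
    and d: "tgtF r s \<noteq> srcF r s" and ok: "Ok n s"
  shows "Ok (Suc n) t"
proof -
  have jjr: "jj \<in> {0..L i'}" using j' jj by auto
  have m'r: "j' - 1 \<in> {0..L i'}" using j' by auto
  have "srcF r = cpx1 t \<or> (0 < m \<and> srcF r = cpx2 (Y i) t)" by (rule YL[OF rR t le])
  hence "cpx1 (U i' j') = cpx1 t" using sr cpx1_ne_cpx2 by metis
  hence tt: "t = U i' j'" by (simp add: cpx1_eq_iff)
  have sp: "s = U i' j' \<or> s = Y i' \<or> s = S i' jj" by (rule spec2[OF d tg sr])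
  from ok show ?thesis
  proof (cases rule: Ok_cases)
    case (OS j0)
    have sU: "s \<noteq> U i' j'" using U_ni[OF i' j' ni_S[OF i_in OS(1)]] OS(2) by metis
    hence sp2: "S i j0 = Y i' \<or> S i j0 = S i' jj" using sp OS(2) by metis
    show ?thesis
    proof (cases "i' = i")
      case True
      have "S i j0 \<noteq> Y i" using YS[OF OS(1)] by metis
      hence "S i j0 = S i jj" using sp2 True by metis
      hence "j0 = jj" using inj_S[OF i_in OS(1)] jjr True by metis
      hence "2 * (L i - j') + 1 \<le> Suc n" using jj OS(3) j' True by auto
      moreover have "j' \<in> {1..L i}" using j' True by simp
      ultimately show ?thesis using tt True OkU by metis
    next
      case False
      have c1: "Y i' \<noteq> Y i"
      proof
        assume yy: "Y i' = Y i"
        have "S i j0 \<noteq> Y i" using YS[OF OS(1)] by metis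
        hence "S i j0 = S i' jj" using sp2 yy by metis
        hence "cpx2 (Y i) (S i j0) = cpx2 (Y i') (S i' jj)" using yy by simp
        thus False using cYY[OF i_in i' OS(1) jjr] False by metis
      qed
      have c2: "S i' (j' - 1) \<noteq> Y i"
      proof
        assume sy: "S i' (j' - 1) = Y i"
        from sp2 show False
        proof
          assume a: "S i j0 = Y i'"
          hence "cpx2 (Y i) (S i j0) = cpx2 (Y i') (S i' (j' - 1))" using sy by (simp add: cpx2_eq_iff)
          thus False using cYY[OF i_in i' OS(1) m'r] False by metis
        next
          assume a: "S i j0 = S i' jj"
          show False
          proof (cases "jj = j' - 1")
            case True thus False using a sy YS[OF OS(1)] by metis
          next
            case False
            hence "jj = j'" using jj by metis
            thus False using cls_Y[OF i' i_in m'r jjr OS(1) sy] a by metis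
          qed
        qed
      qed
      show ?thesis using DeadU[OF i' j' c1 c2] tt OkD by metis
    qed
  next
    case (OU j0)
    have "s \<noteq> Y i'" using U_ni[OF i_in OU(1) ni_Y[OF i']] OU(2) by metis
    moreover have "s \<noteq> S i' jj" using U_ni[OF i_in OU(1) ni_S[OF i' jjr]] OU(2) by metis
    ultimately have "s = t" using sp tt by metis
    thus ?thesis using OU OkU[OF OU(1)] by simp
  next
    case (OV j0)
    have "s \<noteq> Y i'" using V_ni[OF i_in OV(1) ni_Y[OF i']] OV(2) by metis
    moreover have "s \<noteq> S i' jj" using V_ni[OF i_in OV(1) ni_S[OF i' jjr]] OV(2) by metis
    ultimately have "V i j0 = U i' j'" using sp OV(2) by metis
    thus ?thesis using UV[OF i' i_in j' OV(1)] by metis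
  next
    case OD
    have "s \<noteq> Y i'" using int_ni[OF Dead_int[OF OD]] ni_Y[OF i'] by metis
    moreover have "s \<noteq> S i' jj" using int_ni[OF Dead_int[OF OD]] ni_S[OF i' jjr] by metis
    ultimately have "s = t" using sp tt by metis
    thus ?thesis using OD OkD by metis
  qed
qed

lemma edge_TA:
  assumes i': "i' \<in> {1..N}" and j': "j' \<in> {1..L i'}" and r: "r = Rta i' j'"
    and t: "t \<noteq> Y i" and s: "s \<noteq> Y i" and le: "le_c (srcF r) (ymono m t)"
    and d: "tgtF r s \<noteq> srcF r s" and ok: "Ok n s"
  shows "Ok (Suc n) t"
proof -
  have jr: "j' \<in> {0..L i'}" using j' by auto
  have sr: "srcF r = cpx2 (Yt i') (S i' j')" and tg: "tgtF r = cpx1 (V i' j')" using r by simp_all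
  have rR: "r \<in> R" using r i' j' unfolding labs_def by blast
  have "srcF r = cpx1 t \<or> (0 < m \<and> srcF r = cpx2 (Y i) t)" by (rule YL[OF rR t le])
  hence e: "cpx2 (Yt i') (S i' j') = cpx2 (Y i) t" using sr cpx1_ne_cpx2 by metis
  hence sub: "(Yt i' = Y i \<and> S i' j' = t) \<or> (Yt i' = t \<and> S i' j' = Y i)" by (simp add: cpx2_eq_iff)
  have sp: "s = V i' j' \<or> s = Yt i' \<or> s = S i' j'" by (rule spec1[OF d tg sr])
  have st: "s = V i' j' \<or> s = t" using sp sub s by blast
  have tni: "t \<in> nonintermediates N L Y Yt S" using sub ni_Yt[OF i'] ni_S[OF i' jr] by metis
  have y1: "0 < srcF r (Y i)" using e sr by (simp add: cpx2_def)
  from ok show ?thesis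
  proof (cases rule: Ok_cases)
    case (OS j0)
    have "s \<noteq> V i' j'" using V_ni[OF i' j' ni_S[OF i_in OS(1)]] OS(2) by metis
    hence ts: "t = S i j0" using st OS(2) by metis
    have "cpx2 (Y i) (S i j0) = cpx2 (Yt i') (S i' j')" using e ts by metis
    thus ?thesis using cYT[OF i_in i' OS(1) jr] by metis
  next
    case (OU j0)
    have "s \<noteq> t" using OU(2) U_ni[OF i_in OU(1) tni] by metis
    hence "U i j0 = V i' j'" using st OU(2) by metis
    thus ?thesis using UV[OF i_in i' OU(1) j'] by metis
  next
    case (OV j0)
    have "s \<noteq> t" using OV(2) V_ni[OF i_in OV(1) tni] by metis
    hence "V i j0 = V i' j'" using st OV(2) by metis
    hence ii: "i = i' \<and> j0 = j'" using VV[OF i_in i' OV(1) j'] by blast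
    from sub show ?thesis
    proof
      assume "Yt i' = Y i \<and> S i' j' = t" thus ?thesis using ii YYt by metis
    next
      assume "Yt i' = t \<and> S i' j' = Y i"
      hence "S i j0 = Y i" using ii by metis
      thus ?thesis using YS OV(1) by auto
    qed
  next
    case OD
    have "s \<noteq> t" using Dead_int[OF OD] int_ni tni by metis
    hence "s = V i' j'" using st by metis
    hence "srcF r (Y i) = 0" using OD rR tg unfolding Dead_def by blast
    thus ?thesis using y1 by simp
  qed
qed

lemma edge_TBC:
  assumes i': "i' \<in> {1..N}" and j': "j' \<in> {1..L i'}" and jj: "jj = j' - 1 \<or> jj = j'"
    and sr: "srcF r = cpx1 (V i' j')" and tg: "tgtF r = cpx2 (Yt i') (S i' jj)"
    and rR: "r \<in> R"
    and t: "t \<noteq> Y i" and s: "s \<noteq> Y i" and le: "le_c (srcF r) (ymono m t)"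
    and d: "tgtF r s \<noteq> srcF r s" and ok: "Ok n s"
  shows "Ok (Suc n) t"
proof -
  have jjr: "jj \<in> {0..L i'}" using j' jj by auto
  have jr: "j' \<in> {0..L i'}" using j' by auto
  have "srcF r = cpx1 t \<or> (0 < m \<and> srcF r = cpx2 (Y i) t)" by (rule YL[OF rR t le])
  hence "cpx1 (V i' j') = cpx1 t" using sr cpx1_ne_cpx2 by metis
  hence tt: "t = V i' j'" by (simp add: cpx1_eq_iff)
  have sp: "s = V i' j' \<or> s = Yt i' \<or> s = S i' jj" by (rule spec2[OF d tg sr])
  from ok show ?thesis
  proof (cases rule: Ok_cases)
    case (OS j0)
    have sU: "s \<noteq> V i' j'" using V_ni[OF i' j' ni_S[OF i_in OS(1)]] OS(2) by metis
    hence sp2: "S i j0 = Yt i' \<or> S i j0 = S i' jj" using sp OS(2) by metis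
    show ?thesis
    proof (cases "i' = i")
      case True
      have "S i j0 \<noteq> Yt i" using YtS[OF OS(1)] by metis
      hence "S i j0 = S i jj" using sp2 True by metis
      hence "j0 = jj" using inj_S[OF i_in OS(1)] jjr True by metis
      hence "2 * (L i - j') + 1 \<le> Suc n" using jj OS(3) j' True by auto
      moreover have "j' \<in> {1..L i}" using j' True by simp
      ultimately show ?thesis using tt True OkV by metis
    next
      case False
      have c1: "Yt i' \<noteq> Y i"
      proof
        assume yy: "Yt i' = Y i"
        have "S i j0 \<noteq> Y i" using YS[OF OS(1)] by metis
        hence "S i j0 = S i' jj" using sp2 yy by metis
        hence "cpx2 (Y i) (S i j0) = cpx2 (Yt i') (S i' jj)" using yy by simp
        thus False using cYT[OF i_in i' OS(1) jjr] by metis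
      qed
      have c2: "S i' j' \<noteq> Y i"
      proof
        assume sy: "S i' j' = Y i"
        from sp2 show False
        proof
          assume a: "S i j0 = Yt i'"
          hence "cpx2 (Y i) (S i j0) = cpx2 (Yt i') (S i' j')" using sy by (simp add: cpx2_eq_iff)
          thus False using cYT[OF i_in i' OS(1) jr] by metis
        next
          assume a: "S i j0 = S i' jj"
          show False
          proof (cases "jj = j'")
            case True thus False using a sy YS[OF OS(1)] by metis
          next
            case False
            hence "jj = j' - 1" using jj by metis
            thus False using cls_Y[OF i' i_in jr jjr OS(1) sy] a by metis
          qed
        qed
      qed
      show ?thesis using DeadV[OF i' j' False c1 c2] tt OkD by metis
    qed
  next
    case (OU j0)
    have "s \<noteq> Yt i'" using U_ni[OF i_in OU(1) ni_Yt[OF i']] OU(2) by metis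
    moreover have "s \<noteq> S i' jj" using U_ni[OF i_in OU(1) ni_S[OF i' jjr]] OU(2) by metis
    ultimately have "U i j0 = V i' j'" using sp OU(2) by metis
    thus ?thesis using UV[OF i_in i' OU(1) j'] by metis
  next
    case (OV j0)
    have "s \<noteq> Yt i'" using V_ni[OF i_in OV(1) ni_Yt[OF i']] OV(2) by metis
    moreover have "s \<noteq> S i' jj" using V_ni[OF i_in OV(1) ni_S[OF i' jjr]] OV(2) by metis
    ultimately have "s = t" using sp tt by metis
    thus ?thesis using OV OkV[OF OV(1)] by simp
  next
    case OD
    have "s \<noteq> Yt i'" using int_ni[OF Dead_int[OF OD]] ni_Yt[OF i'] by metis
    moreover have "s \<noteq> S i' jj" using int_ni[OF Dead_int[OF OD]] ni_S[OF i' jjr] by metis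
    ultimately have "s = t" using sp tt by metis
    thus ?thesis using OD OkD by metis
  qed
qed

lemma edge:
  assumes r: "r \<in> R" and t: "t \<noteq> Y i" and s: "s \<noteq> Y i" and le: "le_c (srcF r) (ymono m t)"
    and d: "tgtF r s \<noteq> srcF r s" and ok: "Ok n s"
  shows "Ok (Suc n) t"
  using r
proof (cases rule: labs_cases)
  case (A a b) thus ?thesis using edge_A[OF A t s le d ok] by simp
next
  case (B a b) thus ?thesis using edge_BC[of a b "b - 1" r] r t s le d ok by simp
next
  case (C a b) thus ?thesis using edge_BC[of a b b r] r t s le d ok by simp
next
  case (TA a b) thus ?thesis using edge_TA[OF TA t s le d ok] by simp
next
  case (TB a b) thus ?thesis using edge_TBC[of a b b r] r t s le d ok by simp
next
  case (TC a b) thus ?thesis using edge_TBC[of a b "b - 1" r] r t s le d ok by simp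
qed

end


context chain begin

lemma Zlem: "t \<noteq> Y i \<Longrightarrow> co k n (ymono m t) \<noteq> 0 \<Longrightarrow> Ok n t"
proof (induction n arbitrary: m t)
  case 0
  hence e: "ymono m t = cpx1 (S i (L i))" by (simp add: co_0 c0_def split: if_splits)
  have "0 < ymono m t t" by (simp add: ymono_pos)
  hence "0 < cpx1 (S i (L i)) t" using e by simp
  hence "t = S i (L i)" by (simp add: cpx1_pos)
  thus ?case using OkS[of "L i" 0] by simp
next
  case (Suc n)
  let ?g = "ymono m t"
  have "lieC R srcF tgtF k (co k n) ?g \<noteq> 0" using Suc.prems by (simp add: co_Suc)
  then obtain r where rR: "r \<in> R" and nz: "(if le_c (srcF r) ?g then k r * (\<Sum>s\<in>UNIV. (real (tgtF r s) - real (srcF r s)) *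
      ((real (?g s) + 1 - real (srcF r s)) * co k n (sub_add ?g (srcF r) s))) else 0) \<noteq> 0"
    unfolding lieC_def using sum.not_neutral_contains_not_neutral by blast
  hence le: "le_c (srcF r) ?g" and "(\<Sum>s\<in>UNIV. (real (tgtF r s) - real (srcF r s)) *
      ((real (?g s) + 1 - real (srcF r s)) * co k n (sub_add ?g (srcF r) s))) \<noteq> 0"
    by (auto split: if_splits)
  then obtain s where nz2: "(real (tgtF r s) - real (srcF r s)) *
      ((real (?g s) + 1 - real (srcF r s)) * co k n (sub_add ?g (srcF r) s)) \<noteq> 0"
    using sum.not_neutral_contains_not_neutral by blast
  hence d: "tgtF r s \<noteq> srcF r s" and c: "co k n (sub_add ?g (srcF r) s) \<noteq> 0" by auto
  have "\<exists>m'. sub_add ?g (srcF r) s = ymono m' s"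
    using YL[OF rR Suc.prems(1) le] SA1[OF Suc.prems(1)] SA2[OF Suc.prems(1)] by metis
  then obtain m' where "co k n (ymono m' s) \<noteq> 0" using c by metis
  moreover hence "s \<noteq> Y i" using co_ymono_y by metis
  ultimately have "Ok n s" using Suc.IH by blast
  thus ?case using edge[OF rR Suc.prems(1) \<open>s \<noteq> Y i\<close> le d] by blast
qed

lemma Zzero: "t \<noteq> Y i \<Longrightarrow> \<not> Ok n t \<Longrightarrow> co k n (ymono m t) = 0"
  using Zlem by blast

lemma notOk_S: assumes j: "j \<in> {0..L i}" and n: "n < 2 * (L i - j)" shows "\<not> Ok n (S i j)"
proof
  assume "Ok n (S i j)"
  thus False
  proof (cases rule: Ok_cases)
    case (OS j0) thus False using inj_S[OF i_in j OS(1)] n by auto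
  next
    case (OU j0) thus False using U_ni[OF i_in OU(1) ni_S[OF i_in j]] by metis
  next
    case (OV j0) thus False using V_ni[OF i_in OV(1) ni_S[OF i_in j]] by metis
  next
    case OD thus False using int_ni[OF Dead_int[OF OD]] ni_S[OF i_in j] by metis
  qed
qed

lemma U_notDead: assumes j: "j \<in> {1..L i}" shows "U i j \<notin> Dead"
proof
  assume D: "U i j \<in> Dead"
  have rR: "Ra i j \<in> R" using i_in j unfolding labs_def by blast
  have "srcF (Ra i j) (Y i) = 0" using D rR unfolding Dead_def by auto
  thus False by (simp add: cpx2_def)
qed

lemma notOk_U: assumes j: "j \<in> {1..L i}" and n: "n < 2 * (L i - j) + 1" shows "\<not> Ok n (U i j)"
proof
  assume "Ok n (U i j)"
  thus False
  proof (cases rule: Ok_cases)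
    case (OS j0) thus False using U_ni[OF i_in j ni_S[OF i_in OS(1)]] by metis
  next
    case (OU j0) thus False using UU[OF i_in i_in j OU(1)] n by auto
  next
    case (OV j0) thus False using UV[OF i_in i_in j OV(1)] by metis
  next
    case OD thus False using U_notDead[OF j] by simp
  qed
qed

lemma notOk_V: assumes j: "j \<in> {1..L i}" and n: "n < 2 * (L i - j) + 1" shows "\<not> Ok n (V i j)"
proof
  assume "Ok n (V i j)"
  thus False
  proof (cases rule: Ok_cases)
    case (OS j0) thus False using V_ni[OF i_in j ni_S[OF i_in OS(1)]] by metis
  next
    case (OU j0) thus False using UV[OF i_in i_in OU(1) j] by metis
  next
    case (OV j0) thus False using VV[OF i_in i_in j OV(1)] n by auto
  next
    case OD thus False using j unfolding Dead_def by blast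
  qed
qed

lemma notOk_Yt: "\<not> Ok n (Yt i)"
proof
  assume "Ok n (Yt i)"
  thus False
  proof (cases rule: Ok_cases)
    case (OS j0) thus False using YtS[OF OS(1)] by metis
  next
    case (OU j0) thus False using U_ni[OF i_in OU(1) ni_Yt[OF i_in]] by metis
  next
    case (OV j0) thus False using V_ni[OF i_in OV(1) ni_Yt[OF i_in]] by metis
  next
    case OD thus False using int_ni[OF Dead_int[OF OD]] ni_Yt[OF i_in] by metis
  qed
qed

end


lemma cpx1_app: "cpx1 a t = (if t = a then 1 else 0)" by (simp add: cpx1_def)
lemma cpx2_app: "cpx2 a b t = (if t = a then 1 else 0) + (if t = b then 1 else 0)" by (simp add: cpx2_def)

context chain begin

lemma ymono_app: "ymono m t \<tau> = (if \<tau> = Y i then m else 0) + (if \<tau> = t then 1 else 0)"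
  by (simp add: ymono_def)

lemma UY: "j \<in> {1..L i} \<Longrightarrow> U i j \<noteq> Y i" using U_ni[OF i_in _ ni_Y[OF i_in]] by metis
lemma VY: "j \<in> {1..L i} \<Longrightarrow> V i j \<noteq> Y i" using V_ni[OF i_in _ ni_Y[OF i_in]] by metis
lemma US: "j \<in> {1..L i} \<Longrightarrow> q \<in> {0..L i} \<Longrightarrow> U i j \<noteq> S i q" using U_ni[OF i_in _ ni_S[OF i_in]] by metis
lemma VS: "j \<in> {1..L i} \<Longrightarrow> q \<in> {0..L i} \<Longrightarrow> V i j \<noteq> S i q" using V_ni[OF i_in _ ni_S[OF i_in]] by metis
lemma UYt: "j \<in> {1..L i} \<Longrightarrow> U i j \<noteq> Yt i" using U_ni[OF i_in _ ni_Yt[OF i_in]] by metis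
lemma VYt: "j \<in> {1..L i} \<Longrightarrow> V i j \<noteq> Yt i" using V_ni[OF i_in _ ni_Yt[OF i_in]] by metis

lemma inner1:
  assumes t: "t \<noteq> Y i"
  shows "(\<Sum>s\<in>UNIV. (real (cpx2 p q s) - real (cpx1 t s)) *
      ((real (ymono m t s) + 1 - real (cpx1 t s)) * co k n (sub_add (ymono m t) (cpx1 t) s))) =
    (real (ymono m t p) + 1 - real (cpx1 t p)) * co k n (ymono m p) +
    (real (ymono m t q) + 1 - real (cpx1 t q)) * co k n (ymono m q) -
    (real (ymono m t t) + 1 - real (cpx1 t t)) * co k n (ymono m t)"
  unfolding sum_delta_split sum_cpx1 sum_cpx2 SA1[OF t] ..

lemma inner2:
  assumes t: "t \<noteq> Y i"
  shows "(\<Sum>s\<in>UNIV. (real (cpx1 w s) - real (cpx2 (Y i) t s)) *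
      ((real (ymono m t s) + 1 - real (cpx2 (Y i) t s)) * co k n (sub_add (ymono m t) (cpx2 (Y i) t) s))) =
    (real (ymono m t w) + 1 - real (cpx2 (Y i) t w)) * co k n (ymono (m - 1) w) -
    ((real (ymono m t (Y i)) + 1 - real (cpx2 (Y i) t (Y i))) * co k n (ymono (m - 1) (Y i)) +
    (real (ymono m t t) + 1 - real (cpx2 (Y i) t t)) * co k n (ymono (m - 1) t))"
  unfolding sum_delta_split sum_cpx1 sum_cpx2 SA2[OF t] ..

lemma enumU:
  assumes j: "j \<in> {1..L i}" and r: "r \<in> R" and le: "le_c (srcF r) (ymono m (U i j))"
  shows "r \<in> {Rb i j, Rc i j}"
proof -
  have "srcF r = cpx1 (U i j) \<or> (0 < m \<and> srcF r = cpx2 (Y i) (U i j))" by (rule YL[OF r UY[OF j] le])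
  moreover have "srcF r \<noteq> cpx2 (Y i) (U i j)"
    using src_shape[OF r]
  proof (elim disjE exE conjE)
    fix w assume "srcF r = cpx1 w" thus ?thesis using cpx1_ne_cpx2 by metis
  next
    fix a b assume e: "srcF r = cpx2 a b" and a: "a \<in> nonintermediates N L Y Yt S" and b: "b \<in> nonintermediates N L Y Yt S"
    show ?thesis
    proof
      assume "srcF r = cpx2 (Y i) (U i j)"
      hence "U i j = a \<or> U i j = b" using e by (auto simp: cpx2_eq_iff)
      thus False using U_ni[OF i_in j a] U_ni[OF i_in j b] by metis
    qed
  qed
  ultimately have e: "srcF r = cpx1 (U i j)" by metis
  from r show ?thesis
  proof (cases rule: labs_cases)
    case (B a b)
    hence "U a b = U i j" using e by (simp add: cpx1_eq_iff)
    thus ?thesis using UU[OF B(1) i_in B(2) j] B by simp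
  next
    case (C a b)
    hence "U a b = U i j" using e by (simp add: cpx1_eq_iff)
    thus ?thesis using UU[OF C(1) i_in C(2) j] C by simp
  next
    case (TB a b)
    hence "V a b = U i j" using e by (simp add: cpx1_eq_iff)
    thus ?thesis using UV[OF i_in TB(1) j TB(2)] by metis
  next
    case (TC a b)
    hence "V a b = U i j" using e by (simp add: cpx1_eq_iff)
    thus ?thesis using UV[OF i_in TC(1) j TC(2)] by metis
  qed (use e cpx1_ne_cpx2 in \<open>metis src.simps\<close>)+
qed

lemma enumV:
  assumes j: "j \<in> {1..L i}" and r: "r \<in> R" and le: "le_c (srcF r) (ymono m (V i j))"
  shows "r \<in> {Rtb i j, Rtc i j}"
proof -
  have "srcF r = cpx1 (V i j) \<or> (0 < m \<and> srcF r = cpx2 (Y i) (V i j))" by (rule YL[OF r VY[OF j] le])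
  moreover have "srcF r \<noteq> cpx2 (Y i) (V i j)"
    using src_shape[OF r]
  proof (elim disjE exE conjE)
    fix w assume "srcF r = cpx1 w" thus ?thesis using cpx1_ne_cpx2 by metis
  next
    fix a b assume e: "srcF r = cpx2 a b" and a: "a \<in> nonintermediates N L Y Yt S" and b: "b \<in> nonintermediates N L Y Yt S"
    show ?thesis
    proof
      assume "srcF r = cpx2 (Y i) (V i j)"
      hence "V i j = a \<or> V i j = b" using e by (auto simp: cpx2_eq_iff)
      thus False using V_ni[OF i_in j a] V_ni[OF i_in j b] by metis
    qed
  qed
  ultimately have e: "srcF r = cpx1 (V i j)" by metis
  from r show ?thesis
  proof (cases rule: labs_cases)
    case (B a b)
    hence "U a b = V i j" using e by (simp add: cpx1_eq_iff)
    thus ?thesis using UV[OF B(1) i_in B(2) j] by metis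
  next
    case (C a b)
    hence "U a b = V i j" using e by (simp add: cpx1_eq_iff)
    thus ?thesis using UV[OF C(1) i_in C(2) j] by metis
  next
    case (TB a b)
    hence "V a b = V i j" using e by (simp add: cpx1_eq_iff)
    thus ?thesis using VV[OF TB(1) i_in TB(2) j] TB by simp
  next
    case (TC a b)
    hence "V a b = V i j" using e by (simp add: cpx1_eq_iff)
    thus ?thesis using VV[OF TC(1) i_in TC(2) j] TC by simp
  qed (use e cpx1_ne_cpx2 in \<open>metis src.simps\<close>)+
qed

lemma enumS:
  assumes q: "q \<in> {0..L i}" and r: "r \<in> R" and le: "le_c (srcF r) (ymono m (S i q))"
  shows "0 < m \<and> q < L i \<and> r = Ra i (Suc q)"
proof -
  have "srcF r = cpx1 (S i q) \<or> (0 < m \<and> srcF r = cpx2 (Y i) (S i q))" by (rule YL[OF r YS[OF q] le])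
  moreover have "srcF r \<noteq> cpx1 (S i q)"
    using src_shape[OF r]
  proof (elim disjE exE conjE)
    fix w assume e: "srcF r = cpx1 w" and w: "w \<in> intermediates N L U V"
    show ?thesis
    proof
      assume "srcF r = cpx1 (S i q)" hence "w = S i q" using e by (simp add: cpx1_eq_iff)
      thus False using int_ni[OF w] ni_S[OF i_in q] by metis
    qed
  next
    fix a b assume "srcF r = cpx2 a b" thus ?thesis using cpx1_ne_cpx2 by metis
  qed
  ultimately have m: "0 < m" and e: "srcF r = cpx2 (Y i) (S i q)" by metis+
  from r have "q < L i \<and> r = Ra i (Suc q)"
  proof (cases rule: labs_cases)
    case (A a b)
    hence "cpx2 (Y i) (S i q) = cpx2 (Y a) (S a (b - 1))" using e by simp
    moreover have "b - 1 \<in> {0..L a}" using A(2) by auto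
    ultimately have "i = a \<and> q = b - 1" using cYY[OF i_in A(1) q] by blast
    thus ?thesis using A by auto
  next
    case (TA a b)
    hence "cpx2 (Y i) (S i q) = cpx2 (Yt a) (S a b)" using e by simp
    moreover have "b \<in> {0..L a}" using TA(2) by auto
    ultimately show ?thesis using cYT[OF i_in TA(1) q] by blast
  qed (use e cpx1_ne_cpx2 in \<open>metis src.simps\<close>)+
  thus ?thesis using m by simp
qed


lemma TU:
  assumes j: "j \<in> {1..L i}"
  shows "co k (Suc n) (ymono m (U i j)) =
    k (Rb i j) * (co k n (ymono m (S i (j - 1))) - co k n (ymono m (U i j))) +
    k (Rc i j) * (co k n (ymono m (S i j)) - co k n (ymono m (U i j)))"
proof -
  have A: "{Rb i j, Rc i j} \<subseteq> R" using i_in j unfolding labs_def by blast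
  have j1: "j - 1 \<in> {0..L i}" and j0: "j \<in> {0..L i}" using j by auto
  have n1: "U i j \<noteq> Y i" "S i (j - 1) \<noteq> Y i" "S i j \<noteq> Y i" "S i (j - 1) \<noteq> U i j" "S i j \<noteq> U i j"
    using UY[OF j] YS[OF j1] YS[OF j0] US[OF j j1] US[OF j j0] by metis+
  have n2: "Y i \<noteq> U i j" "Y i \<noteq> S i (j - 1)" "Y i \<noteq> S i j" "U i j \<noteq> S i (j - 1)" "U i j \<noteq> S i j"
    using n1 by metis+
  have "co k (Suc n) (ymono m (U i j)) = (\<Sum>r\<in>{Rb i j, Rc i j}. k r * (\<Sum>s\<in>UNIV. (real (tgtF r s) - real (srcF r s)) *
            ((real (ymono m (U i j) s) + 1 - real (srcF r s)) * co k n (sub_add (ymono m (U i j)) (srcF r) s))))"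
    unfolding co_Suc by (rule lie_enum[OF A]) (use enumU[OF j] in \<open>auto simp: le_cpx1 ymono_pos\<close>)
  also have "\<dots> = k (Rb i j) * (\<Sum>s\<in>UNIV. (real (cpx2 (Y i) (S i (j - 1)) s) - real (cpx1 (U i j) s)) *
            ((real (ymono m (U i j) s) + 1 - real (cpx1 (U i j) s)) * co k n (sub_add (ymono m (U i j)) (cpx1 (U i j)) s))) +
       k (Rc i j) * (\<Sum>s\<in>UNIV. (real (cpx2 (Y i) (S i j) s) - real (cpx1 (U i j) s)) *
            ((real (ymono m (U i j) s) + 1 - real (cpx1 (U i j) s)) * co k n (sub_add (ymono m (U i j)) (cpx1 (U i j)) s)))"
    by simp
  also have "\<dots> = k (Rb i j) * (co k n (ymono m (S i (j - 1))) - co k n (ymono m (U i j))) +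
    k (Rc i j) * (co k n (ymono m (S i j)) - co k n (ymono m (U i j)))"
    unfolding inner1[OF n1(1)] by (simp add: ymono_app cpx1_app n1 n2 co_ymono_y algebra_simps)
  finally show ?thesis .
qed

lemma TV:
  assumes j: "j \<in> {1..L i}"
  shows "co k (Suc n) (ymono m (V i j)) =
    k (Rtb i j) * (co k n (ymono m (Yt i)) + co k n (ymono m (S i j)) - co k n (ymono m (V i j))) +
    k (Rtc i j) * (co k n (ymono m (Yt i)) + co k n (ymono m (S i (j - 1))) - co k n (ymono m (V i j)))"
proof -
  have A: "{Rtb i j, Rtc i j} \<subseteq> R" using i_in j unfolding labs_def by blast
  have j1: "j - 1 \<in> {0..L i}" and j0: "j \<in> {0..L i}" using j by auto
  have n1: "V i j \<noteq> Y i" "S i (j - 1) \<noteq> Y i" "S i j \<noteq> Y i" "S i (j - 1) \<noteq> V i j" "S i j \<noteq> V i j"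
     "Yt i \<noteq> Y i" "Yt i \<noteq> V i j"
    using VY[OF j] YS[OF j1] YS[OF j0] VS[OF j j1] VS[OF j j0] YYt VYt[OF j] by metis+
  have n2: "Y i \<noteq> V i j" "Y i \<noteq> S i (j - 1)" "Y i \<noteq> S i j" "V i j \<noteq> S i (j - 1)" "V i j \<noteq> S i j"
    "Y i \<noteq> Yt i" "V i j \<noteq> Yt i"
    using n1 by metis+
  have "co k (Suc n) (ymono m (V i j)) = (\<Sum>r\<in>{Rtb i j, Rtc i j}. k r * (\<Sum>s\<in>UNIV. (real (tgtF r s) - real (srcF r s)) *
            ((real (ymono m (V i j) s) + 1 - real (srcF r s)) * co k n (sub_add (ymono m (V i j)) (srcF r) s))))"
    unfolding co_Suc by (rule lie_enum[OF A]) (use enumV[OF j] in \<open>auto simp: le_cpx1 ymono_pos\<close>)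
  also have "\<dots> = k (Rtb i j) * (\<Sum>s\<in>UNIV. (real (cpx2 (Yt i) (S i j) s) - real (cpx1 (V i j) s)) *
            ((real (ymono m (V i j) s) + 1 - real (cpx1 (V i j) s)) * co k n (sub_add (ymono m (V i j)) (cpx1 (V i j)) s))) +
       k (Rtc i j) * (\<Sum>s\<in>UNIV. (real (cpx2 (Yt i) (S i (j - 1)) s) - real (cpx1 (V i j) s)) *
            ((real (ymono m (V i j) s) + 1 - real (cpx1 (V i j) s)) * co k n (sub_add (ymono m (V i j)) (cpx1 (V i j)) s)))"
    by simp
  also have "\<dots> = k (Rtb i j) * (co k n (ymono m (Yt i)) + co k n (ymono m (S i j)) - co k n (ymono m (V i j))) +
    k (Rtc i j) * (co k n (ymono m (Yt i)) + co k n (ymono m (S i (j - 1))) - co k n (ymono m (V i j)))"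
    unfolding inner1[OF n1(1)] by (simp add: ymono_app cpx1_app n1 n2 co_ymono_y algebra_simps)
  finally show ?thesis .
qed

lemma TS:
  assumes q: "q \<in> {0..L i}"
  shows "co k (Suc n) (ymono m (S i q)) =
    (if 0 < m \<and> q < L i then k (Ra i (Suc q)) * (co k n (ymono (m - 1) (U i (Suc q))) - co k n (ymono (m - 1) (S i q))) else 0)"
proof (cases "0 < m \<and> q < L i")
  case True
  have j: "Suc q \<in> {1..L i}" using True by auto
  have A: "{Ra i (Suc q)} \<subseteq> R" using i_in j unfolding labs_def by blast
  have n1: "U i (Suc q) \<noteq> Y i" "S i q \<noteq> Y i" "S i q \<noteq> U i (Suc q)"
    using UY[OF j] YS[OF q] US[OF j q] by metis+
  have n2: "Y i \<noteq> U i (Suc q)" "Y i \<noteq> S i q" "U i (Suc q) \<noteq> S i q" using n1 by metis+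
  have le: "le_c (cpx2 (Y i) (S i q)) (ymono m (S i q))"
    using True n2 by (simp add: le_cpx2 ymono_pos)
  have "co k (Suc n) (ymono m (S i q)) = (\<Sum>r\<in>{Ra i (Suc q)}. k r * (\<Sum>s\<in>UNIV. (real (tgtF r s) - real (srcF r s)) *
            ((real (ymono m (S i q) s) + 1 - real (srcF r s)) * co k n (sub_add (ymono m (S i q)) (srcF r) s))))"
    unfolding co_Suc by (rule lie_enum[OF A]) (use enumS[OF q] le in auto)
  also have "\<dots> = k (Ra i (Suc q)) * (\<Sum>s\<in>UNIV. (real (cpx1 (U i (Suc q)) s) - real (cpx2 (Y i) (S i q) s)) *
            ((real (ymono m (S i q) s) + 1 - real (cpx2 (Y i) (S i q) s)) * co k n (sub_add (ymono m (S i q)) (cpx2 (Y i) (S i q)) s)))"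
    by simp
  also have "\<dots> = k (Ra i (Suc q)) * (co k n (ymono (m - 1) (U i (Suc q))) - co k n (ymono (m - 1) (S i q)))"
    unfolding inner2[OF n1(2)] by (simp add: ymono_app cpx2_app n1 n2 co_ymono_y algebra_simps)
  finally show ?thesis using True by simp
next
  case False
  have "co k (Suc n) (ymono m (S i q)) = (\<Sum>r\<in>{}. k r * (\<Sum>s\<in>UNIV. (real (tgtF r s) - real (srcF r s)) *
            ((real (ymono m (S i q) s) + 1 - real (srcF r s)) * co k n (sub_add (ymono m (S i q)) (srcF r) s))))"
    unfolding co_Suc by (rule lie_enum) (use enumS[OF q] False in auto)
  thus ?thesis unfolding if_not_P[OF False] by simp
qed

end


context chain begin

definition Pk :: "(rlab \<Rightarrow> real) \<Rightarrow> nat \<Rightarrow> real" where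
  "Pk k j = (\<Prod>q\<in>{Suc j..L i}. k (Rc i q) * k (Ra i q))"

lemma Pk_step: "1 \<le> j \<Longrightarrow> j \<le> L i \<Longrightarrow> Pk k (j - 1) = k (Rc i j) * k (Ra i j) * Pk k j"
proof -
  assume j: "1 \<le> j" "j \<le> L i"
  have "{Suc (j - 1)..L i} = insert j {Suc j..L i}" using j by auto
  thus ?thesis unfolding Pk_def by simp
qed

lemma Pk_L: "Pk k (L i) = 1" by (simp add: Pk_def)

lemma co0_ymono: "co k 0 (ymono m (S i (L i))) = (if m = 0 then 1 else 0)"
proof -
  have "ymono m (S i (L i)) = cpx1 (S i (L i)) \<longleftrightarrow> m = 0"
  proof
    assume "ymono m (S i (L i)) = cpx1 (S i (L i))"
    hence "ymono m (S i (L i)) (Y i) = cpx1 (S i (L i)) (Y i)" by simp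
    thus "m = 0" using YS[of "L i"] by (simp add: ymono_app cpx1_app)
  next
    assume "m = 0" thus "ymono m (S i (L i)) = cpx1 (S i (L i))" by (simp add: ymono_def cpx1_def fun_eq_iff)
  qed
  thus ?thesis by (simp add: co_0 c0_def)
qed

lemma coU: assumes j: "j \<in> {1..L i}"
  shows "co k (Suc (2 * (L i - j))) (ymono m (U i j)) = k (Rc i j) * co k (2 * (L i - j)) (ymono m (S i j))"
proof -
  have j1: "j - 1 \<in> {0..L i}" using j by auto
  have z1: "co k (2 * (L i - j)) (ymono m (S i (j - 1))) = 0"
    by (rule Zzero[OF YS[OF j1] notOk_S[OF j1]]) (use j in auto)
  have z2: "co k (2 * (L i - j)) (ymono m (U i j)) = 0"
    by (rule Zzero[OF UY[OF j] notOk_U[OF j]]) auto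
  show ?thesis using TU[OF j, of k "2 * (L i - j)" m] z1 z2 by simp
qed

lemma coV: assumes j: "j \<in> {1..L i}"
  shows "co k (Suc (2 * (L i - j))) (ymono m (V i j)) = k (Rtb i j) * co k (2 * (L i - j)) (ymono m (S i j))"
proof -
  have j1: "j - 1 \<in> {0..L i}" using j by auto
  have z1: "co k (2 * (L i - j)) (ymono m (S i (j - 1))) = 0"
    by (rule Zzero[OF YS[OF j1] notOk_S[OF j1]]) (use j in auto)
  have z2: "co k (2 * (L i - j)) (ymono m (V i j)) = 0"
    by (rule Zzero[OF VY[OF j] notOk_V[OF j]]) auto
  have z3: "co k (2 * (L i - j)) (ymono m (Yt i)) = 0"
    by (rule Zzero[OF YYt notOk_Yt])
  show ?thesis using TV[OF j, of k "2 * (L i - j)" m] z1 z2 z3 by simp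
qed

lemma coSm: assumes j: "j \<in> {1..L i}"
  shows "co k (Suc (Suc (2 * (L i - j)))) (ymono m (S i (j - 1))) =
     (if 0 < m then k (Ra i j) * co k (Suc (2 * (L i - j))) (ymono (m - 1) (U i j)) else 0)"
proof -
  have j1: "j - 1 \<in> {0..L i}" using j by auto
  have sj: "Suc (j - 1) = j" using j by auto
  have lt: "j - 1 < L i" using j by auto
  have z1: "co k (Suc (2 * (L i - j))) (ymono (m - 1) (S i (j - 1))) = 0"
    by (rule Zzero[OF YS[OF j1] notOk_S[OF j1]]) (use j in auto)
  show ?thesis using TS[OF j1, of k "Suc (2 * (L i - j))" m] z1 sj lt by simp
qed

lemma chainS: "d < L i \<Longrightarrow> co k (2 * d) (ymono m (S i (L i - d))) = (if m = d then Pk k (L i - d) else 0)"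
proof (induction d arbitrary: m)
  case 0 thus ?case by (simp add: co0_ymono Pk_L)
next
  case (Suc d)
  define j where "j = L i - d"
  have j: "j \<in> {1..L i}" and j2: "2 \<le> j" using Suc.prems unfolding j_def by auto
  have ld: "L i - j = d" and ls: "L i - Suc d = j - 1" using Suc.prems unfolding j_def by auto
  have IH: "co k (2 * d) (ymono m' (S i j)) = (if m' = d then Pk k j else 0)" for m'
    using Suc.IH[of m'] Suc.prems unfolding j_def by simp
  have e2: "2 * Suc d = Suc (Suc (2 * (L i - j)))" using ld by simp
  have "co k (2 * Suc d) (ymono m (S i (L i - Suc d))) = co k (Suc (Suc (2 * (L i - j)))) (ymono m (S i (j - 1)))"
    using e2 ls by simp
  also have "\<dots> = (if 0 < m then k (Ra i j) * (k (Rc i j) * co k (2 * d) (ymono (m - 1) (S i j))) else 0)"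
    using coSm[OF j] coU[OF j] ld by simp
  also have "\<dots> = (if m = Suc d then Pk k (j - 1) else 0)"
    using IH Pk_step[of j k] j by (auto simp: algebra_simps)
  finally show ?case using ls by simp
qed

lemma FU: assumes j: "j \<in> {1..L i}"
  shows "co k (Suc (2 * (L i - j))) (ymono (L i - j) (U i j)) = k (Rc i j) * Pk k j"
  using coU[OF j] chainS[of "L i - j" k "L i - j"] j by auto

lemma FV: assumes j: "j \<in> {1..L i}"
  shows "co k (Suc (2 * (L i - j))) (ymono (L i - j) (V i j)) = k (Rtb i j) * Pk k j"
  using coV[OF j] chainS[of "L i - j" k "L i - j"] j by auto

lemma FA: "co k 2 (ymono 1 (S i (L i - 1))) = k (Ra i (L i)) * k (Rc i (L i))"
proof -
  have j: "L i \<in> {1..L i}" using LLpos by auto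
  have "co k 2 (ymono 1 (S i (L i - 1))) = k (Ra i (L i)) * co k 1 (ymono 0 (U i (L i)))"
    using coSm[OF j, of k 1] by (simp add: numeral_2_eq_2)
  also have "co k 1 (ymono 0 (U i (L i))) = k (Rc i (L i))"
    using coU[OF j, of k 0] by (simp add: co0_ymono)
  finally show ?thesis .
qed

lemma FB: "co k 2 (ymono 0 (U i (L i))) = - ((k (Rb i (L i)) + k (Rc i (L i))) * k (Rc i (L i)))"
proof -
  have j: "L i \<in> {1..L i}" using LLpos by auto
  have q1: "L i - 1 \<in> {0..L i}" and q2: "L i \<in> {0..L i}" by auto
  have u: "co k 1 (ymono 0 (U i (L i))) = k (Rc i (L i))"
    using coU[OF j, of k 0] by (simp add: co0_ymono)
  have s1: "co k 1 (ymono 0 (S i (L i - 1))) = 0" using TS[OF q1, of k 0 0] by simp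
  have s2: "co k 1 (ymono 0 (S i (L i))) = 0" using TS[OF q2, of k 0 0] by simp
  show ?thesis using TU[OF j, of k 1 0] u s1 s2 by (simp add: numeral_2_eq_2 algebra_simps)
qed

end


definition cpx3 :: "'s \<Rightarrow> 's \<Rightarrow> 's \<Rightarrow> 's complex" where
  "cpx3 a b c = (\<lambda>t. (if t = a then 1 else 0) + (if t = b then 1 else 0) + (if t = c then 1 else 0))"

lemma cpx3_app: "cpx3 a b c t = (if t = a then 1 else 0) + (if t = b then 1 else 0) + (if t = c then 1 else 0)"
  by (simp add: cpx3_def)
lemma cpx3_pos: "0 < cpx3 a b c t \<longleftrightarrow> t = a \<or> t = b \<or> t = c"
  by (simp add: cpx3_def)

lemma SA3a: "sub_add (cpx3 a b c) (cpx2 a b) s = cpx2 c s"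
  by (simp add: sub_add_def cpx3_def cpx2_def fun_eq_iff)
lemma SA3b: "sub_add (cpx3 a b c) (cpx2 a c) s = cpx2 b s"
  by (simp add: sub_add_def cpx3_def cpx2_def fun_eq_iff)
lemma SA4: "sub_add (cpx2 a w) (cpx1 w) s = cpx2 a s"
  by (simp add: sub_add_def cpx1_def cpx2_def fun_eq_iff)

lemma sub_add_self: "sub_add g g s = cpx1 s"
  by (simp add: sub_add_def cpx1_def fun_eq_iff)

context chain begin

lemma cpx2_ymono: "cpx2 (Y i) t = ymono 1 t"
  by (simp add: cpx2_def ymono_def fun_eq_iff)

lemma cpx2_ymono': "cpx2 t (Y i) = ymono 1 t"
  using cpx2_comm[of t "Y i"] cpx2_ymono by metis

lemma srcSS_false:
  assumes r: "r \<in> R" and a: "a \<in> {0..L i}" and b: "b \<in> {0..L i}" and e: "srcF r = cpx2 (S i a) (S i b)"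
  shows False
  using r
proof (cases rule: labs_cases)
  case (A a' b')
  have m: "b' - 1 \<in> {0..L a'}" using A by auto
  have "cpx2 (Y a') (S a' (b' - 1)) = cpx2 (S i a) (S i b)" using e A by simp
  hence "(Y a' = S i a \<and> S a' (b' - 1) = S i b) \<or> (Y a' = S i b \<and> S a' (b' - 1) = S i a)" by (simp add: cpx2_eq_iff)
  thus False using cls_Y[OF i_in A(1) a b m] cls_Y[OF i_in A(1) b a m] by metis
next
  case (TA a' b')
  have m: "b' \<in> {0..L a'}" using TA by auto
  have "cpx2 (Yt a') (S a' b') = cpx2 (S i a) (S i b)" using e TA by simp
  hence "(Yt a' = S i a \<and> S a' b' = S i b) \<or> (Yt a' = S i b \<and> S a' b' = S i a)" by (simp add: cpx2_eq_iff)
  thus False using cls_Yt[OF i_in TA(1) a b m] cls_Yt[OF i_in TA(1) b a m] by metis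
qed (use e cpx1_ne_cpx2 in \<open>metis src.simps\<close>)+

lemma srcYS:
  assumes r: "r \<in> R" and q: "q \<in> {0..L i}" and e: "srcF r = cpx2 (Y i) (S i q)"
  shows "q < L i \<and> r = Ra i (Suc q)"
  using r
proof (cases rule: labs_cases)
  case (A a b)
  have m: "b - 1 \<in> {0..L a}" using A by auto
  have "cpx2 (Y i) (S i q) = cpx2 (Y a) (S a (b - 1))" using e A by simp
  hence "i = a \<and> q = b - 1" using cYY[OF i_in A(1) q m] by blast
  thus ?thesis using A by auto
next
  case (TA a b)
  have m: "b \<in> {0..L a}" using TA by auto
  have "cpx2 (Y i) (S i q) = cpx2 (Yt a) (S a b)" using e TA by simp
  thus ?thesis using cYT[OF i_in TA(1) q m] by blast
qed (use e cpx1_ne_cpx2 in \<open>metis src.simps\<close>)+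

lemma srcTS:
  assumes r: "r \<in> R" and q: "q \<in> {0..L i}" and e: "srcF r = cpx2 (Yt i) (S i q)"
  shows "1 \<le> q \<and> r = Rta i q"
  using r
proof (cases rule: labs_cases)
  case (A a b)
  have m: "b - 1 \<in> {0..L a}" using A by auto
  have "cpx2 (Yt i) (S i q) = cpx2 (Y a) (S a (b - 1))" using e A by simp
  thus ?thesis using cYT[OF A(1) i_in m q] by metis
next
  case (TA a b)
  have m: "b \<in> {0..L a}" using TA by auto
  have "cpx2 (Yt i) (S i q) = cpx2 (Yt a) (S a b)" using e TA by simp
  hence "i = a \<and> q = b" using cTT[OF i_in TA(1) q m] by blast
  thus ?thesis using TA by auto
qed (use e cpx1_ne_cpx2 in \<open>metis src.simps\<close>)+

lemma srcU:
  assumes r: "r \<in> R" and j: "j \<in> {1..L i}" and e: "srcF r = cpx1 (U i j)"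
  shows "r \<in> {Rb i j, Rc i j}"
  using enumU[OF j r, of 0] e by (simp add: le_cpx1 ymono_pos)

lemma srcV:
  assumes r: "r \<in> R" and j: "j \<in> {1..L i}" and e: "srcF r = cpx1 (V i j)"
  shows "r \<in> {Rtb i j, Rtc i j}"
  using enumV[OF j r, of 0] e by (simp add: le_cpx1 ymono_pos)

lemma co_SS: assumes a: "a \<in> {0..L i}" and b: "b \<in> {0..L i}"
  shows "co k (Suc n) (cpx2 (S i a) (S i b)) = 0"
proof -
  have "\<not> le_c (srcF r) (cpx2 (S i a) (S i b))" if r: "r \<in> R" for r
    using src_shape[OF r]
  proof (elim disjE exE conjE)
    fix w assume e: "srcF r = cpx1 w" and w: "w \<in> intermediates N L U V"
    show ?thesis
    proof
      assume "le_c (srcF r) (cpx2 (S i a) (S i b))"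
      hence "w = S i a \<or> w = S i b" using e by (simp add: le_cpx1 cpx2_pos)
      thus False using int_ni[OF w] ni_S[OF i_in a] ni_S[OF i_in b] by metis
    qed
  next
    fix p q assume e: "srcF r = cpx2 p q" and pq: "p \<noteq> q"
    show ?thesis
    proof
      assume "le_c (srcF r) (cpx2 (S i a) (S i b))"
      hence "(p = S i a \<or> p = S i b) \<and> (q = S i a \<or> q = S i b)" using e pq by (simp add: le_cpx2 cpx2_pos)
      hence "srcF r = cpx2 (S i a) (S i b) \<or> srcF r = cpx2 (S i b) (S i a)" using e pq by (auto simp: cpx2_eq_iff)
      thus False using srcSS_false[OF r a b] srcSS_false[OF r b a] by metis
    qed
  qed
  hence "lieC R srcF tgtF k (co k n) (cpx2 (S i a) (S i b)) = (\<Sum>r\<in>{}. k r * (\<Sum>s\<in>UNIV. (real (tgtF r s) - real (srcF r s)) *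
            ((real (cpx2 (S i a) (S i b) s) + 1 - real (srcF r s)) * co k n (sub_add (cpx2 (S i a) (S i b)) (srcF r) s))))"
    by (intro lie_enum) auto
  thus ?thesis by (simp add: co_Suc)
qed

lemma co1_formula:
  "co k 1 g = (\<Sum>r\<in>R. if srcF r = g then k r * (real (tgtF r (S i (L i))) - real (srcF r (S i (L i)))) else 0)"
proof -
  have "co k 1 g = lieC R srcF tgtF k c0 g" by (simp add: co_Suc[of k 0, simplified] co_0)
  also have "\<dots> = (\<Sum>r\<in>R. if srcF r = g then k r * (real (tgtF r (S i (L i))) - real (srcF r (S i (L i)))) else 0)"
    unfolding lieC_def
  proof (rule sum.cong[OF refl])
    fix r
    have key: "le_c (srcF r) g \<Longrightarrow> sub_add g (srcF r) s = cpx1 (S i (L i)) \<longleftrightarrow> s = S i (L i) \<and> g = srcF r" for s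
    proof
      assume le: "le_c (srcF r) g" and e: "sub_add g (srcF r) s = cpx1 (S i (L i))"
      have "sub_add g (srcF r) s s = cpx1 (S i (L i)) s" using e by simp
      hence ss: "s = S i (L i)" by (simp add: sub_add_def cpx1_def split: if_splits)
      have "g t = srcF r t" for t
      proof -
        have "sub_add g (srcF r) s t = cpx1 (S i (L i)) t" using e by simp
        hence "g t - srcF r t = 0" using ss by (simp add: sub_add_def cpx1_def split: if_splits)
        thus ?thesis using le by (simp add: le_c_def) (meson diff_is_0_eq le_antisym le_c_def)
      qed
      thus "s = S i (L i) \<and> g = srcF r" using ss by auto
    next
      assume "s = S i (L i) \<and> g = srcF r"
      thus "sub_add g (srcF r) s = cpx1 (S i (L i))" by (simp add: sub_add_self)
    qed
    show "(if le_c (srcF r) g then k r * (\<Sum>s\<in>UNIV. (real (tgtF r s) - real (srcF r s)) *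
        ((real (g s) + 1 - real (srcF r s)) * c0 (sub_add g (srcF r) s))) else 0) =
      (if srcF r = g then k r * (real (tgtF r (S i (L i))) - real (srcF r (S i (L i)))) else 0)"
    proof (cases "le_c (srcF r) g")
      case True
      have "(\<Sum>s\<in>UNIV. (real (tgtF r s) - real (srcF r s)) *
        ((real (g s) + 1 - real (srcF r s)) * c0 (sub_add g (srcF r) s))) =
        (\<Sum>s\<in>UNIV. if s = S i (L i) then (if g = srcF r then real (tgtF r s) - real (srcF r s) else 0) else 0)"
        by (rule sum.cong[OF refl]) (auto simp: c0_def key[OF True])
      also have "\<dots> = (if g = srcF r then real (tgtF r (S i (L i))) - real (srcF r (S i (L i))) else 0)"
        by simp
      finally show ?thesis using True by auto
    next
      case False
      hence "srcF r \<noteq> g" by (auto simp: le_c_def)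
      thus ?thesis using False by simp
    qed
  qed
  finally show ?thesis .
qed


lemma co_2: "co k 2 = lieC R srcF tgtF k (co k 1)"
proof -
  have e: "(2::nat) = Suc 1" by simp
  show ?thesis by (subst e) (rule co_Suc)
qed

lemma co_3: "co k 3 = lieC R srcF tgtF k (co k 2)"
proof -
  have e: "(3::nat) = Suc 2" by simp
  show ?thesis by (subst e) (rule co_Suc)
qed

lemma co1_int: assumes w: "w \<in> intermediates N L U V" shows "co k 1 (cpx2 p w) = 0"
proof -
  have "srcF r \<noteq> cpx2 p w" if r: "r \<in> R" for r
    using src_shape[OF r]
  proof (elim disjE exE conjE)
    fix w' assume "srcF r = cpx1 w'" thus ?thesis using cpx1_ne_cpx2 by metis
  next
    fix a b assume e: "srcF r = cpx2 a b" and a: "a \<in> nonintermediates N L Y Yt S" and b: "b \<in> nonintermediates N L Y Yt S"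
    show ?thesis
    proof
      assume "srcF r = cpx2 p w"
      hence "w = a \<or> w = b" using e by (auto simp: cpx2_eq_iff)
      thus False using int_ni[OF w] a b by metis
    qed
  qed
  thus ?thesis unfolding co1_formula by (intro sum.neutral) auto
qed

lemma co1_TS: assumes q: "q \<in> {1..L i}"
  shows "co k 1 (cpx2 (Yt i) (S i q)) = (if q = L i then - k (Rta i q) else 0)"
proof -
  have q0: "q \<in> {0..L i}" using q by auto
  have rq: "Rta i q \<in> R" using i_in q unfolding labs_def by blast
  define f where "f r = k r * (real (tgtF r (S i (L i))) - real (srcF r (S i (L i))))" for r
  have cg: "(if srcF r = cpx2 (Yt i) (S i q) then f r else 0) = (if r = Rta i q then f r else 0)" if r: "r \<in> R" for r
  proof (cases "srcF r = cpx2 (Yt i) (S i q)")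
    case True
    hence "r = Rta i q" using srcTS[OF r q0] by blast
    thus ?thesis using True by simp
  next
    case False
    hence "r \<noteq> Rta i q" by auto
    thus ?thesis using False by simp
  qed
  have "co k 1 (cpx2 (Yt i) (S i q)) = (\<Sum>r\<in>R. if r = Rta i q then f r else 0)"
    unfolding co1_formula f_def[symmetric] by (rule sum.cong[OF refl cg])
  also have "\<dots> = f (Rta i q)" using rq by (simp add: sum.delta[OF finite_labs])
  also have "\<dots> = (if q = L i then - k (Rta i q) else 0)"
  proof (cases "q = L i")
    case True
    have b: "S i (L i) \<noteq> Yt i" using YtS[of "L i"] by auto
    have a: "S i (L i) \<noteq> V i q" using VS[OF q, of "L i"] by auto
    have "cpx1 (V i q) (S i (L i)) = 0" using a by (simp add: cpx1_app)
    moreover have "cpx2 (Yt i) (S i q) (S i (L i)) = 1" using b True by (simp add: cpx2_app)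
    ultimately show ?thesis using True by (simp add: f_def)
  next
    case False
    have b: "S i (L i) \<noteq> Yt i" using YtS[of "L i"] by auto
    have a: "S i (L i) \<noteq> V i q" using VS[OF q, of "L i"] by auto
    have c: "S i (L i) \<noteq> S i q" using inj_S[OF i_in q0, of "L i"] False by auto
    have "cpx1 (V i q) (S i (L i)) = 0" using a by (simp add: cpx1_app)
    moreover have "cpx2 (Yt i) (S i q) (S i (L i)) = 0" using b c by (simp add: cpx2_app)
    ultimately show ?thesis using False by (simp add: f_def)
  qed
  finally show ?thesis .
qed

lemma innerA: "(\<Sum>(s::'s)\<in>UNIV. (real (cpx2 p q s) - real (cpx1 w s)) * (F s * c (sub_add (cpx2 a w) (cpx1 w) s))) =
   F p * c (cpx2 a p) + F q * c (cpx2 a q) - F w * (c (cpx2 a w) :: real)"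
  unfolding sum_delta_split sum_cpx1 sum_cpx2 SA4 ..

lemma innerB: "(\<Sum>(s::'s)\<in>UNIV. (real (cpx1 w s) - real (cpx2 a b s)) * (F s * c (sub_add (cpx3 a b cc) (cpx2 a b) s))) =
   F w * c (cpx2 cc w) - (F a * c (cpx2 cc a) + F b * (c (cpx2 cc b) :: real))"
  unfolding sum_delta_split sum_cpx1 sum_cpx2 SA3a ..

lemma innerC: "(\<Sum>(s::'s)\<in>UNIV. (real (cpx1 w s) - real (cpx2 a cc s)) * (F s * c (sub_add (cpx3 a b cc) (cpx2 a cc) s))) =
   F w * c (cpx2 b w) - (F a * c (cpx2 b a) + F cc * (c (cpx2 b cc) :: real))"
  unfolding sum_delta_split sum_cpx1 sum_cpx2 SA3b ..

lemma O2c: assumes q: "q \<in> {0..L i}" and ql: "q < L i" and j: "j \<in> {1..L i}"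
  shows "co k 2 (cpx2 (S i q) (U i j)) = 0"
proof -
  have A: "{Rb i j, Rc i j} \<subseteq> R" using i_in j unfolding labs_def by blast
  have j1: "j - 1 \<in> {0..L i}" and j0: "j \<in> {0..L i}" using j by auto
  have h1: "r \<in> {Rb i j, Rc i j}" if r: "r \<in> R" and le: "le_c (srcF r) (cpx2 (S i q) (U i j))" for r
    using src_shape[OF r]
  proof (elim disjE exE conjE)
    fix w assume e: "srcF r = cpx1 w" and w: "w \<in> intermediates N L U V"
    have "w = S i q \<or> w = U i j" using le e by (simp add: le_cpx1 cpx2_pos)
    hence "w = U i j" using int_ni[OF w] ni_S[OF i_in q] by metis
    thus ?thesis using srcU[OF r j] e by simp
  next
    fix a b assume e: "srcF r = cpx2 a b" and ab: "a \<noteq> b" and a: "a \<in> nonintermediates N L Y Yt S" and b: "b \<in> nonintermediates N L Y Yt S"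
    have "(a = S i q \<or> a = U i j) \<and> (b = S i q \<or> b = U i j)" using le e ab by (simp add: le_cpx2 cpx2_pos)
    hence "a = S i q \<and> b = S i q" using U_ni[OF i_in j a] U_ni[OF i_in j b] by metis
    thus ?thesis using ab by simp
  qed
  have h2: "le_c (srcF r) (cpx2 (S i q) (U i j))" if "r \<in> {Rb i j, Rc i j}" for r
    using that by (auto simp: le_cpx1 cpx2_pos)
  have z1: "co k 1 (cpx2 (S i q) (Y i)) = 0"
    using Zzero[OF YS[OF q] notOk_S[OF q], of 1 k 1] ql by (simp add: cpx2_comm[of "S i q"] cpx2_ymono)
  have z2: "co k 1 (cpx2 (S i q) (S i (j - 1))) = 0" "co k 1 (cpx2 (S i q) (S i j)) = 0"
    using co_SS[OF q j1, of k 0] co_SS[OF q j0, of k 0] by simp_all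
  have z3: "co k 1 (cpx2 (S i q) (U i j)) = 0" by (rule co1_int[OF int_U[OF i_in j]])
  have "co k 2 (cpx2 (S i q) (U i j)) = (\<Sum>r\<in>{Rb i j, Rc i j}. k r * (\<Sum>s\<in>UNIV. (real (tgtF r s) - real (srcF r s)) *
            ((real (cpx2 (S i q) (U i j) s) + 1 - real (srcF r s)) * co k 1 (sub_add (cpx2 (S i q) (U i j)) (srcF r) s))))"
    unfolding co_2 by (rule lie_enum[OF A h1 h2])
  also have "\<dots> = k (Rb i j) * (\<Sum>s\<in>UNIV. (real (cpx2 (Y i) (S i (j - 1)) s) - real (cpx1 (U i j) s)) *
            ((real (cpx2 (S i q) (U i j) s) + 1 - real (cpx1 (U i j) s)) * co k 1 (sub_add (cpx2 (S i q) (U i j)) (cpx1 (U i j)) s))) +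
       k (Rc i j) * (\<Sum>s\<in>UNIV. (real (cpx2 (Y i) (S i j) s) - real (cpx1 (U i j) s)) *
            ((real (cpx2 (S i q) (U i j) s) + 1 - real (cpx1 (U i j) s)) * co k 1 (sub_add (cpx2 (S i q) (U i j)) (cpx1 (U i j)) s)))"
    by simp
  also have "\<dots> = 0" unfolding innerA[where c="co k 1"] using z1 z2 z3 by simp
  finally show ?thesis .
qed


lemma enum_SV: assumes q: "q \<in> {0..L i}" and j: "j \<in> {1..L i}" and r: "r \<in> R"
    and le: "le_c (srcF r) (cpx2 (S i q) (V i j))"
  shows "r \<in> {Rtb i j, Rtc i j}"
  using src_shape[OF r]
proof (elim disjE exE conjE)
  fix w assume e: "srcF r = cpx1 w" and w: "w \<in> intermediates N L U V"
  have "w = S i q \<or> w = V i j" using le e by (simp add: le_cpx1 cpx2_pos)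
  hence "w = V i j" using int_ni[OF w] ni_S[OF i_in q] by metis
  thus ?thesis using srcV[OF r j] e by simp
next
  fix a b assume e: "srcF r = cpx2 a b" and ab: "a \<noteq> b" and a: "a \<in> nonintermediates N L Y Yt S" and b: "b \<in> nonintermediates N L Y Yt S"
  have "(a = S i q \<or> a = V i j) \<and> (b = S i q \<or> b = V i j)" using le e ab by (simp add: le_cpx2 cpx2_pos)
  hence "a = S i q \<and> b = S i q" using V_ni[OF i_in j a] V_ni[OF i_in j b] by metis
  thus ?thesis using ab by simp
qed

lemma enum_SU: assumes q: "q \<in> {0..L i}" and j: "j \<in> {1..L i}" and r: "r \<in> R"
    and le: "le_c (srcF r) (cpx2 (S i q) (U i j))"
  shows "r \<in> {Rb i j, Rc i j}"
  using src_shape[OF r]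
proof (elim disjE exE conjE)
  fix w assume e: "srcF r = cpx1 w" and w: "w \<in> intermediates N L U V"
  have "w = S i q \<or> w = U i j" using le e by (simp add: le_cpx1 cpx2_pos)
  hence "w = U i j" using int_ni[OF w] ni_S[OF i_in q] by metis
  thus ?thesis using srcU[OF r j] e by simp
next
  fix a b assume e: "srcF r = cpx2 a b" and ab: "a \<noteq> b" and a: "a \<in> nonintermediates N L Y Yt S" and b: "b \<in> nonintermediates N L Y Yt S"
  have "(a = S i q \<or> a = U i j) \<and> (b = S i q \<or> b = U i j)" using le e ab by (simp add: le_cpx2 cpx2_pos)
  hence "a = S i q \<and> b = S i q" using U_ni[OF i_in j a] U_ni[OF i_in j b] by metis
  thus ?thesis using ab by simp
qed

lemma enum3:
  assumes r: "r \<in> R" and E: "E = Y i \<or> E = Yt i" and a: "a \<in> {0..L i}" and b: "b \<in> {0..L i}"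
    and le: "le_c (srcF r) (cpx3 E (S i a) (S i b))"
  shows "srcF r = cpx2 E (S i a) \<or> srcF r = cpx2 E (S i b)"
  using src_shape[OF r]
proof (elim disjE exE conjE)
  fix w assume e: "srcF r = cpx1 w" and w: "w \<in> intermediates N L U V"
  have "w = E \<or> w = S i a \<or> w = S i b" using le e by (simp add: le_cpx1 cpx3_pos)
  thus ?thesis using int_ni[OF w] ni_S[OF i_in a] ni_S[OF i_in b] ni_Y[OF i_in] ni_Yt[OF i_in] E by metis
next
  fix p q assume e: "srcF r = cpx2 p q" and pq: "p \<noteq> q"
  have p: "p = E \<or> p = S i a \<or> p = S i b" and q: "q = E \<or> q = S i a \<or> q = S i b"
    using le e pq by (simp_all add: le_cpx2 cpx3_pos)
  show ?thesis
  proof (cases "p = E \<or> q = E")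
    case True
    thus ?thesis using p q pq e cpx2_comm by metis
  next
    case False
    hence "srcF r = cpx2 (S i a) (S i b) \<or> srcF r = cpx2 (S i b) (S i a) \<or> p = q" using p q e by metis
    thus ?thesis using srcSS_false[OF r a b] srcSS_false[OF r b a] pq by metis
  qed
qed

lemma O2a: assumes j: "j \<in> {1..L i}" and jl: "j < L i"
  shows "co k 2 (cpx3 (Yt i) (S i (L i)) (S i j)) = k (Rta i j) * k (Rta i (L i))"
proof -
  let ?g = "cpx3 (Yt i) (S i (L i)) (S i j)"
  have jL: "L i \<in> {1..L i}" using LLpos by auto
  have j0: "j \<in> {0..L i}" and L0: "L i \<in> {0..L i}" using j by auto
  have A: "{Rta i (L i), Rta i j} \<subseteq> R" using i_in j jL unfolding labs_def by blast
  have h1: "r \<in> {Rta i (L i), Rta i j}" if r: "r \<in> R" and le: "le_c (srcF r) ?g" for r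
    using enum3[OF r _ L0 j0 le] srcTS[OF r L0] srcTS[OF r j0] by auto
  have n1: "Yt i \<noteq> S i (L i)" "Yt i \<noteq> S i j" using YtS[OF L0] YtS[OF j0] by metis+
  have h2: "le_c (srcF r) ?g" if "r \<in> {Rta i (L i), Rta i j}" for r
    using that n1 by (auto simp: le_cpx2 cpx3_pos)
  have ne: "Rta i (L i) \<noteq> Rta i j" using jl by simp
  have z1: "co k 1 (cpx2 (S i j) (V i (L i))) = 0" "co k 1 (cpx2 (S i (L i)) (V i j)) = 0"
    using co1_int[OF int_V[OF i_in jL]] co1_int[OF int_V[OF i_in j]] by auto
  have z2: "co k 1 (cpx2 (S i j) (Yt i)) = 0" "co k 1 (cpx2 (S i (L i)) (Yt i)) = - k (Rta i (L i))"
    using co1_TS[OF j, of k] co1_TS[OF jL, of k] jl by (simp_all add: cpx2_comm)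
  have z3: "co k 1 (cpx2 (S i j) (S i (L i))) = 0" "co k 1 (cpx2 (S i (L i)) (S i j)) = 0"
    using co_SS[OF j0 L0, of k 0] co_SS[OF L0 j0, of k 0] by simp_all
  have F: "real (?g (Yt i)) + 1 - real (cpx2 (Yt i) (S i j) (Yt i)) = 1"
    using n1 by (simp add: cpx3_app cpx2_app)
  have "co k 2 ?g = (\<Sum>r\<in>{Rta i (L i), Rta i j}. k r * (\<Sum>s\<in>UNIV. (real (tgtF r s) - real (srcF r s)) *
            ((real (?g s) + 1 - real (srcF r s)) * co k 1 (sub_add ?g (srcF r) s))))"
    unfolding co_2 by (rule lie_enum[OF A h1 h2])
  also have "\<dots> = k (Rta i (L i)) * (\<Sum>s\<in>UNIV. (real (cpx1 (V i (L i)) s) - real (cpx2 (Yt i) (S i (L i)) s)) *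
            ((real (?g s) + 1 - real (cpx2 (Yt i) (S i (L i)) s)) * co k 1 (sub_add ?g (cpx2 (Yt i) (S i (L i))) s))) +
       k (Rta i j) * (\<Sum>s\<in>UNIV. (real (cpx1 (V i j) s) - real (cpx2 (Yt i) (S i j) s)) *
            ((real (?g s) + 1 - real (cpx2 (Yt i) (S i j) s)) * co k 1 (sub_add ?g (cpx2 (Yt i) (S i j)) s)))"
    using ne by simp
  also have "\<dots> = k (Rta i j) * k (Rta i (L i))"
    unfolding innerB[where c="co k 1"] innerC[where c="co k 1"] using z1 z2 z3 F by simp
  finally show ?thesis .
qed

lemma O2b: assumes j: "j \<in> {1..L i}"
  shows "co k 2 (cpx2 (S i (L i)) (V i j)) = - ((k (Rtb i j) + k (Rtc i j)) * k (Rta i (L i)))"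
proof -
  let ?g = "cpx2 (S i (L i)) (V i j)"
  have jL: "L i \<in> {1..L i}" using LLpos by auto
  have j0: "j \<in> {0..L i}" and j1: "j - 1 \<in> {0..L i}" and L0: "L i \<in> {0..L i}" using j by auto
  have A: "{Rtb i j, Rtc i j} \<subseteq> R" using i_in j unfolding labs_def by blast
  have h1: "r \<in> {Rtb i j, Rtc i j}" if r: "r \<in> R" and le: "le_c (srcF r) ?g" for r
    by (rule enum_SV[OF L0 j r le])
  have h2: "le_c (srcF r) ?g" if "r \<in> {Rtb i j, Rtc i j}" for r
    using that by (auto simp: le_cpx1 cpx2_pos)
  have n1: "Yt i \<noteq> S i (L i)" "Yt i \<noteq> V i j" using YtS[OF L0] VYt[OF j] by metis+
  have z1: "co k 1 (cpx2 (S i (L i)) (V i j)) = 0" using co1_int[OF int_V[OF i_in j]] by auto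
  have z2: "co k 1 (cpx2 (S i (L i)) (Yt i)) = - k (Rta i (L i))"
    using co1_TS[OF jL, of k] by (simp add: cpx2_comm)
  have z3: "co k 1 (cpx2 (S i (L i)) (S i j)) = 0" "co k 1 (cpx2 (S i (L i)) (S i (j - 1))) = 0"
    using co_SS[OF L0 j0, of k 0] co_SS[OF L0 j1, of k 0] by simp_all
  have F: "real (?g (Yt i)) + 1 - real (cpx1 (V i j) (Yt i)) = 1"
    using n1 by (simp add: cpx1_app cpx2_app)
  have "co k 2 ?g = (\<Sum>r\<in>{Rtb i j, Rtc i j}. k r * (\<Sum>s\<in>UNIV. (real (tgtF r s) - real (srcF r s)) *
            ((real (?g s) + 1 - real (srcF r s)) * co k 1 (sub_add ?g (srcF r) s))))"
    unfolding co_2 by (rule lie_enum[OF A h1 h2])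
  also have "\<dots> = k (Rtb i j) * (\<Sum>s\<in>UNIV. (real (cpx2 (Yt i) (S i j) s) - real (cpx1 (V i j) s)) *
            ((real (?g s) + 1 - real (cpx1 (V i j) s)) * co k 1 (sub_add ?g (cpx1 (V i j)) s))) +
       k (Rtc i j) * (\<Sum>s\<in>UNIV. (real (cpx2 (Yt i) (S i (j - 1)) s) - real (cpx1 (V i j) s)) *
            ((real (?g s) + 1 - real (cpx1 (V i j) s)) * co k 1 (sub_add ?g (cpx1 (V i j)) s)))"
    by simp
  also have "\<dots> = - ((k (Rtb i j) + k (Rtc i j)) * k (Rta i (L i)))"
    unfolding innerA[where c="co k 1"] using z1 z2 z3 F by (simp add: algebra_simps)
  finally show ?thesis .
qed


lemma O3a: assumes j: "j \<in> {1..L i}" and jl: "j < L i"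
  shows "co k 3 (cpx3 (Y i) (S i (L i - 1)) (S i (j - 1))) = - (k (Ra i j) * (k (Ra i (L i)) * k (Rc i (L i))))"
proof -
  let ?g = "cpx3 (Y i) (S i (L i - 1)) (S i (j - 1))"
  have jL: "L i \<in> {1..L i}" using LLpos by auto
  have j1: "j - 1 \<in> {0..L i}" and L1: "L i - 1 \<in> {0..L i}" using j by auto
  have A: "{Ra i (L i), Ra i j} \<subseteq> R" using i_in j jL unfolding labs_def by blast
  have sL: "Suc (L i - 1) = L i" and sj: "Suc (j - 1) = j" using j LLpos by auto
  have h1: "r \<in> {Ra i (L i), Ra i j}" if r: "r \<in> R" and le: "le_c (srcF r) ?g" for r
    using enum3[OF r _ L1 j1 le] srcYS[OF r L1] srcYS[OF r j1] sL sj by auto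
  have n1: "Y i \<noteq> S i (L i - 1)" "Y i \<noteq> S i (j - 1)" using YS[OF L1] YS[OF j1] by metis+
  have h2: "le_c (srcF r) ?g" if "r \<in> {Ra i (L i), Ra i j}" for r
    using that n1 by (auto simp: le_cpx2 cpx3_pos)
  have ne: "Ra i (L i) \<noteq> Ra i j" using jl by simp
  have z1: "co k 2 (cpx2 (S i (j - 1)) (U i (L i))) = 0" "co k 2 (cpx2 (S i (L i - 1)) (U i j)) = 0"
    using O2c[OF j1 _ jL, of k] O2c[OF L1 _ j, of k] jl LLpos by auto
  have z2: "co k 2 (cpx2 (S i (j - 1)) (Y i)) = 0"
  proof -
    have "co k 2 (ymono 1 (S i (j - 1))) = 0"
      by (rule Zzero[OF YS[OF j1] notOk_S[OF j1]]) (use jl j in auto)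
    thus ?thesis unfolding cpx2_ymono' .
  qed
  have z2b: "co k 2 (cpx2 (S i (L i - 1)) (Y i)) = k (Ra i (L i)) * k (Rc i (L i))"
    using FA[of k] unfolding cpx2_ymono' .
  have z3: "co k 2 (cpx2 (S i (j - 1)) (S i (L i - 1))) = 0" "co k 2 (cpx2 (S i (L i - 1)) (S i (j - 1))) = 0"
    using co_SS[OF j1 L1, of k 1] co_SS[OF L1 j1, of k 1] by (simp_all add: numeral_2_eq_2)
  have F: "real (?g (Y i)) + 1 - real (cpx2 (Y i) (S i (j - 1)) (Y i)) = 1"
    using n1 by (simp add: cpx3_app cpx2_app)
  have "co k 3 ?g = (\<Sum>r\<in>{Ra i (L i), Ra i j}. k r * (\<Sum>s\<in>UNIV. (real (tgtF r s) - real (srcF r s)) *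
            ((real (?g s) + 1 - real (srcF r s)) * co k 2 (sub_add ?g (srcF r) s))))"
    unfolding co_3 by (rule lie_enum[OF A h1 h2])
  also have "\<dots> = k (Ra i (L i)) * (\<Sum>s\<in>UNIV. (real (cpx1 (U i (L i)) s) - real (cpx2 (Y i) (S i (L i - 1)) s)) *
            ((real (?g s) + 1 - real (cpx2 (Y i) (S i (L i - 1)) s)) * co k 2 (sub_add ?g (cpx2 (Y i) (S i (L i - 1))) s))) +
       k (Ra i j) * (\<Sum>s\<in>UNIV. (real (cpx1 (U i j) s) - real (cpx2 (Y i) (S i (j - 1)) s)) *
            ((real (?g s) + 1 - real (cpx2 (Y i) (S i (j - 1)) s)) * co k 2 (sub_add ?g (cpx2 (Y i) (S i (j - 1))) s)))"
    using ne by simp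
  also have "\<dots> = - (k (Ra i j) * (k (Ra i (L i)) * k (Rc i (L i))))"
    unfolding innerB[where c="co k 2"] innerC[where c="co k 2"] using z1 z2 z2b z3 F by simp
  finally show ?thesis .
qed

lemma O3b: assumes j: "j \<in> {1..L i}" and jl: "j < L i"
  shows "co k 3 (cpx2 (S i (L i - 1)) (U i j)) = (k (Rb i j) + k (Rc i j)) * (k (Ra i (L i)) * k (Rc i (L i)))"
proof -
  let ?g = "cpx2 (S i (L i - 1)) (U i j)"
  have j0: "j \<in> {0..L i}" and j1: "j - 1 \<in> {0..L i}" and L1: "L i - 1 \<in> {0..L i}" using j by auto
  have A: "{Rb i j, Rc i j} \<subseteq> R" using i_in j unfolding labs_def by blast
  have h1: "r \<in> {Rb i j, Rc i j}" if r: "r \<in> R" and le: "le_c (srcF r) ?g" for r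
    by (rule enum_SU[OF L1 j r le])
  have h2: "le_c (srcF r) ?g" if "r \<in> {Rb i j, Rc i j}" for r
    using that by (auto simp: le_cpx1 cpx2_pos)
  have n1: "Y i \<noteq> S i (L i - 1)" "Y i \<noteq> U i j" using YS[OF L1] UY[OF j] by metis+
  have z1: "co k 2 (cpx2 (S i (L i - 1)) (U i j)) = 0" using O2c[OF L1 _ j, of k] LLpos by auto
  have z2b: "co k 2 (cpx2 (S i (L i - 1)) (Y i)) = k (Ra i (L i)) * k (Rc i (L i))"
    using FA[of k] unfolding cpx2_ymono' .
  have z3: "co k 2 (cpx2 (S i (L i - 1)) (S i (j - 1))) = 0" "co k 2 (cpx2 (S i (L i - 1)) (S i j)) = 0"
    using co_SS[OF L1 j1, of k 1] co_SS[OF L1 j0, of k 1] by (simp_all add: numeral_2_eq_2)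
  have F: "real (?g (Y i)) + 1 - real (cpx1 (U i j) (Y i)) = 1"
    using n1 by (simp add: cpx1_app cpx2_app)
  have "co k 3 ?g = (\<Sum>r\<in>{Rb i j, Rc i j}. k r * (\<Sum>s\<in>UNIV. (real (tgtF r s) - real (srcF r s)) *
            ((real (?g s) + 1 - real (srcF r s)) * co k 2 (sub_add ?g (srcF r) s))))"
    unfolding co_3 by (rule lie_enum[OF A h1 h2])
  also have "\<dots> = k (Rb i j) * (\<Sum>s\<in>UNIV. (real (cpx2 (Y i) (S i (j - 1)) s) - real (cpx1 (U i j) s)) *
            ((real (?g s) + 1 - real (cpx1 (U i j) s)) * co k 2 (sub_add ?g (cpx1 (U i j)) s))) +
       k (Rc i j) * (\<Sum>s\<in>UNIV. (real (cpx2 (Y i) (S i j) s) - real (cpx1 (U i j) s)) *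
            ((real (?g s) + 1 - real (cpx1 (U i j) s)) * co k 2 (sub_add ?g (cpx1 (U i j)) s)))"
    by simp
  also have "\<dots> = (k (Rb i j) + k (Rc i j)) * (k (Ra i (L i)) * k (Rc i (L i)))"
    unfolding innerA[where c="co k 2"] using z1 z2b z3 F by (simp add: algebra_simps)
  finally show ?thesis .
qed

end


lemma cancel_r: "(a1::real) * c = a2 * c \<Longrightarrow> c \<noteq> 0 \<Longrightarrow> a1 = a2" by simp

context chain begin

lemma Pk_pos: "\<forall>r\<in>R. 0 < k r \<Longrightarrow> 0 < Pk k j"
proof -
  assume pos: "\<forall>r\<in>R. 0 < k r"
  have "0 < k (Rc i q) * k (Ra i q)" if "q \<in> {Suc j..L i}" for q
  proof -
    have q: "q \<in> {1..L i}" using that by auto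
    have "Rc i q \<in> R" "Ra i q \<in> R" using i_in q unfolding labs_def by blast+
    thus ?thesis using pos by simp
  qed
  thus ?thesis unfolding Pk_def by (rule prod_pos)
qed

lemma ident_chain:
  assumes pos1: "\<forall>r\<in>R. 0 < k1 r" and pos2: "\<forall>r\<in>R. 0 < k2 r"
    and eq: "\<And>n. n \<in> {1..max 2 (2 * L i - 1)} \<Longrightarrow> co k1 n = co k2 n"
  shows "\<forall>j\<in>{1..L i}. k1 (Ra i j) = k2 (Ra i j) \<and> k1 (Rb i j) = k2 (Rb i j) \<and> k1 (Rc i j) = k2 (Rc i j) \<and>
           k1 (Rta i j) = k2 (Rta i j) \<and> k1 (Rtb i j) = k2 (Rtb i j) \<and> k1 (Rtc i j) = k2 (Rtc i j)"
proof -
  let ?D = "max 2 (2 * L i - 1)"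
  have jL: "L i \<in> {1..L i}" using LLpos by auto
  have inR: "Ra i j \<in> R" "Rb i j \<in> R" "Rc i j \<in> R" "Rta i j \<in> R" "Rtb i j \<in> R" "Rtc i j \<in> R"
    if "j \<in> {1..L i}" for j using i_in that unfolding labs_def by blast+
  have e1: "co k1 1 = co k2 1" "co k1 2 = co k2 2" using eq by auto
  have u1: "co k 1 (ymono 0 (U i (L i))) = k (Rc i (L i))" for k
    using FU[OF jL, of k] by (simp add: Pk_L)
  have cL: "k1 (Rc i (L i)) = k2 (Rc i (L i))"
    using fun_cong[OF e1(1), of "ymono 0 (U i (L i))"] unfolding u1 .
  have cLp: "0 < k1 (Rc i (L i))" using inR[OF jL] pos1 by blast
  have bL: "k1 (Rb i (L i)) = k2 (Rb i (L i))"
  proof -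
    have "- ((k1 (Rb i (L i)) + k1 (Rc i (L i))) * k1 (Rc i (L i))) = - ((k2 (Rb i (L i)) + k2 (Rc i (L i))) * k2 (Rc i (L i)))"
      using fun_cong[OF e1(2), of "ymono 0 (U i (L i))"] unfolding FB .
    hence "(k1 (Rb i (L i)) + k1 (Rc i (L i))) * k1 (Rc i (L i)) = (k2 (Rb i (L i)) + k2 (Rc i (L i))) * k2 (Rc i (L i))"
      by (simp only: neg_equal_iff_equal)
    hence "(k1 (Rb i (L i)) + k1 (Rc i (L i))) * k1 (Rc i (L i)) = (k2 (Rb i (L i)) + k2 (Rc i (L i))) * k1 (Rc i (L i))"
      unfolding cL .
    hence "k1 (Rb i (L i)) + k1 (Rc i (L i)) = k2 (Rb i (L i)) + k2 (Rc i (L i))"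
      by (rule cancel_r) (use cLp in simp)
    thus ?thesis using cL by linarith
  qed
  have aL: "k1 (Ra i (L i)) = k2 (Ra i (L i))"
  proof -
    have "k1 (Ra i (L i)) * k1 (Rc i (L i)) = k2 (Ra i (L i)) * k2 (Rc i (L i))"
      using fun_cong[OF e1(2), of "ymono 1 (S i (L i - 1))"] unfolding FA .
    hence "k1 (Ra i (L i)) * k1 (Rc i (L i)) = k2 (Ra i (L i)) * k1 (Rc i (L i))" unfolding cL .
    thus ?thesis by (rule cancel_r) (use cLp in simp)
  qed
  have aLp: "0 < k1 (Ra i (L i))" using inR[OF jL] pos1 by blast
  have tL: "k1 (Rta i (L i)) = k2 (Rta i (L i))"
  proof -
    have "co k 1 (cpx2 (Yt i) (S i (L i))) = - k (Rta i (L i))" for k using co1_TS[OF jL, of k] by simp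
    hence "- k1 (Rta i (L i)) = - k2 (Rta i (L i))" using fun_cong[OF e1(1), of "cpx2 (Yt i) (S i (L i))"] by simp
    thus ?thesis by simp
  qed
  have tLp: "0 < k1 (Rta i (L i))" using inR[OF jL] pos1 by blast
  have e3: "L i \<ge> 2 \<Longrightarrow> co k1 3 = co k2 3" using eq by auto
  have a_all: "k1 (Ra i j) = k2 (Ra i j)" if j: "j \<in> {1..L i}" for j
  proof (cases "j < L i")
    case True
    have "co k1 3 = co k2 3" using e3 True j by auto
    have "- (k1 (Ra i j) * (k1 (Ra i (L i)) * k1 (Rc i (L i)))) = - (k2 (Ra i j) * (k2 (Ra i (L i)) * k2 (Rc i (L i))))"
      using fun_cong[OF \<open>co k1 3 = co k2 3\<close>, of "cpx3 (Y i) (S i (L i - 1)) (S i (j - 1))"] unfolding O3a[OF j True] .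
    hence "k1 (Ra i j) * (k1 (Ra i (L i)) * k1 (Rc i (L i))) = k2 (Ra i j) * (k2 (Ra i (L i)) * k2 (Rc i (L i)))"
      by (simp only: neg_equal_iff_equal)
    hence "k1 (Ra i j) * (k1 (Ra i (L i)) * k1 (Rc i (L i))) = k2 (Ra i j) * (k1 (Ra i (L i)) * k1 (Rc i (L i)))"
      unfolding aL cL .
    thus ?thesis by (rule cancel_r) (use aLp cLp in simp)
  next
    case False thus ?thesis using aL j by auto
  qed
  have c_all: "\<forall>j. j \<in> {1..L i} \<longrightarrow> L i - j \<le> d \<longrightarrow> k1 (Rc i j) = k2 (Rc i j)" for d
  proof (induction d)
    case 0
    show ?case
    proof (intro allI impI)
      fix j assume "j \<in> {1..L i}" "L i - j \<le> 0"
      hence "j = L i" by auto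
      thus "k1 (Rc i j) = k2 (Rc i j)" using cL by simp
    qed
  next
    case (Suc d)
    show ?case
    proof (intro allI impI)
      fix j assume j: "j \<in> {1..L i}" and jd: "L i - j \<le> Suc d"
      show "k1 (Rc i j) = k2 (Rc i j)"
      proof (cases "L i - j \<le> d")
        case True thus ?thesis using Suc.IH j by blast
      next
        case False
        have Peq: "Pk k1 j = Pk k2 j"
          unfolding Pk_def
        proof (rule prod.cong[OF refl])
          fix q assume q: "q \<in> {Suc j..L i}"
          hence q1: "q \<in> {1..L i}" and qd: "L i - q \<le> d" using False jd by auto
          have "k1 (Rc i q) = k2 (Rc i q)" using Suc.IH q1 qd by blast
          thus "k1 (Rc i q) * k1 (Ra i q) = k2 (Rc i q) * k2 (Ra i q)" using a_all[OF q1] by simp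
        qed
        have n: "Suc (2 * (L i - j)) \<in> {1..?D}" using j by auto
        have "k1 (Rc i j) * Pk k1 j = k2 (Rc i j) * Pk k2 j"
          using fun_cong[OF eq[OF n], of "ymono (L i - j) (U i j)"] unfolding FU[OF j] .
        hence "k1 (Rc i j) * Pk k1 j = k2 (Rc i j) * Pk k1 j" unfolding Peq .
        thus ?thesis by (rule cancel_r) (use Pk_pos[OF pos1, of j] in simp)
      qed
    qed
  qed
  have c_all': "k1 (Rc i j) = k2 (Rc i j)" if "j \<in> {1..L i}" for j using c_all[of "L i - j"] that by blast
  have Pk_eq: "Pk k1 j = Pk k2 j" if "j \<in> {1..L i}" for j
    unfolding Pk_def
  proof (rule prod.cong[OF refl])
    fix q assume q: "q \<in> {Suc j..L i}"
    hence q1: "q \<in> {1..L i}" using that by auto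
    show "k1 (Rc i q) * k1 (Ra i q) = k2 (Rc i q) * k2 (Ra i q)" using c_all'[OF q1] a_all[OF q1] by simp
  qed
  have tb_all: "k1 (Rtb i j) = k2 (Rtb i j)" if j: "j \<in> {1..L i}" for j
  proof -
    have n: "Suc (2 * (L i - j)) \<in> {1..?D}" using j by auto
    have "k1 (Rtb i j) * Pk k1 j = k2 (Rtb i j) * Pk k2 j"
      using fun_cong[OF eq[OF n], of "ymono (L i - j) (V i j)"] unfolding FV[OF j] .
    hence "k1 (Rtb i j) * Pk k1 j = k2 (Rtb i j) * Pk k1 j" unfolding Pk_eq[OF j] .
    thus ?thesis by (rule cancel_r) (use Pk_pos[OF pos1, of j] in simp)
  qed
  have b_all: "k1 (Rb i j) = k2 (Rb i j)" if j: "j \<in> {1..L i}" for j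
  proof (cases "j < L i")
    case True
    have "co k1 3 = co k2 3" using e3 True j by auto
    have "(k1 (Rb i j) + k1 (Rc i j)) * (k1 (Ra i (L i)) * k1 (Rc i (L i))) =
           (k2 (Rb i j) + k2 (Rc i j)) * (k2 (Ra i (L i)) * k2 (Rc i (L i)))"
      using fun_cong[OF \<open>co k1 3 = co k2 3\<close>, of "cpx2 (S i (L i - 1)) (U i j)"] unfolding O3b[OF j True] .
    hence "(k1 (Rb i j) + k1 (Rc i j)) * (k1 (Ra i (L i)) * k1 (Rc i (L i))) =
           (k2 (Rb i j) + k2 (Rc i j)) * (k1 (Ra i (L i)) * k1 (Rc i (L i)))"
      unfolding aL cL .
    hence "k1 (Rb i j) + k1 (Rc i j) = k2 (Rb i j) + k2 (Rc i j)"
      by (rule cancel_r) (use aLp cLp in simp)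
    thus ?thesis using c_all'[OF j] by linarith
  next
    case False thus ?thesis using bL j by auto
  qed
  have ta_all: "k1 (Rta i j) = k2 (Rta i j)" if j: "j \<in> {1..L i}" for j
  proof (cases "j < L i")
    case True
    have "k1 (Rta i j) * k1 (Rta i (L i)) = k2 (Rta i j) * k2 (Rta i (L i))"
      using fun_cong[OF e1(2), of "cpx3 (Yt i) (S i (L i)) (S i j)"] unfolding O2a[OF j True] .
    hence "k1 (Rta i j) * k1 (Rta i (L i)) = k2 (Rta i j) * k1 (Rta i (L i))" unfolding tL .
    thus ?thesis by (rule cancel_r) (use tLp in simp)
  next
    case False thus ?thesis using tL j by auto
  qed
  have tc_all: "k1 (Rtc i j) = k2 (Rtc i j)" if j: "j \<in> {1..L i}" for j
  proof -
    have "- ((k1 (Rtb i j) + k1 (Rtc i j)) * k1 (Rta i (L i))) = - ((k2 (Rtb i j) + k2 (Rtc i j)) * k2 (Rta i (L i)))"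
      using fun_cong[OF e1(2), of "cpx2 (S i (L i)) (V i j)"] unfolding O2b[OF j] .
    hence "(k1 (Rtb i j) + k1 (Rtc i j)) * k1 (Rta i (L i)) = (k2 (Rtb i j) + k2 (Rtc i j)) * k2 (Rta i (L i))"
      by (simp only: neg_equal_iff_equal)
    hence "(k1 (Rtb i j) + k1 (Rtc i j)) * k1 (Rta i (L i)) = (k2 (Rtb i j) + k2 (Rtc i j)) * k1 (Rta i (L i))"
      unfolding tL .
    hence "k1 (Rtb i j) + k1 (Rtc i j) = k2 (Rtb i j) + k2 (Rtc i j)"
      by (rule cancel_r) (use tLp in simp)
    thus ?thesis using tb_all[OF j] by linarith
  qed
  show ?thesis using a_all b_all c_all' ta_all tb_all tc_all by blast
qed

end


lemma monom_cpx1: "monom (cpx1 s) x = x s"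
proof -
  have "monom (cpx1 s) x = (\<Prod>t\<in>UNIV. if t = s then x t else 1)"
    unfolding monom_def cpx1_def by (rule prod.cong) auto
  also have "\<dots> = x s" by simp
  finally show ?thesis .
qed

context chain begin

lemma peval_c0: "peval 1 c0 = (\<lambda>x. x (S i (L i)))"
proof
  fix x
  have m: "cpx1 (S i (L i)) \<in> Bnd 1" by (simp add: Bnd_def cpx1_def)
  have "peval 1 c0 x = (\<Sum>b\<in>Bnd 1. if b = cpx1 (S i (L i)) then monom b x else 0)"
    unfolding peval_def c0_def by (rule sum.cong) auto
  also have "\<dots> = monom (cpx1 (S i (L i))) x" using m by (simp add: sum.delta[OF finite_Bnd])
  finally show "peval 1 c0 x = x (S i (L i))" by (simp add: monom_cpx1)
qed

lemma bnd_c0: "bnd 1 c0"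
  by (simp add: bnd_def c0_def Bnd_def cpx1_def)

lemma tdi_co: "total_deriv_iter (chain_field N L Y Yt S U V k) n (\<lambda>x. x (S i (L i))) = peval (1 + 2*n) (co k n) \<and>
    bnd (1 + 2*n) (co k n)"
  using iter_peval[OF finite_labs src_le2 bnd_c0, where l=n and k=k and tg=tgtF] unfolding peval_c0 co_def chain_field_def
  by simp

lemma ident_from_tdi:
  assumes pos1: "\<forall>r\<in>R. 0 < k1 r" and pos2: "\<forall>r\<in>R. 0 < k2 r"
    and H: "\<forall>l\<in>{1..max 2 (2 * L i - 1)}.
              total_deriv_iter (chain_field N L Y Yt S U V k1) l (\<lambda>x. x (S i (L i))) =
              total_deriv_iter (chain_field N L Y Yt S U V k2) l (\<lambda>x. x (S i (L i)))"
  shows "\<forall>j\<in>{1..L i}. k1 (Ra i j) = k2 (Ra i j) \<and> k1 (Rb i j) = k2 (Rb i j) \<and> k1 (Rc i j) = k2 (Rc i j) \<and>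
           k1 (Rta i j) = k2 (Rta i j) \<and> k1 (Rtb i j) = k2 (Rtb i j) \<and> k1 (Rtc i j) = k2 (Rtc i j)"
proof (rule ident_chain[OF pos1 pos2])
  fix n assume n: "n \<in> {1..max 2 (2 * L i - 1)}"
  have "peval (1 + 2*n) (co k1 n) = peval (1 + 2*n) (co k2 n)"
    using H n tdi_co[of k1 n] tdi_co[of k2 n] by metis
  thus "co k1 n = co k2 n"
    using peval_unique tdi_co[of k1 n] tdi_co[of k2 n] by blast
qed

end

theorem mainTheorem4:
  fixes N :: nat and L :: "nat \<Rightarrow> nat"
    and Y Yt :: "nat \<Rightarrow> 's::finite" and S U V :: "nat \<Rightarrow> nat \<Rightarrow> 's"
  assumes "H1 N L Y Yt S U V" and "H2 N L Y Yt S U V"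
  shows "\<forall>k1 k2 :: rlab \<Rightarrow> real.
           (\<forall>r\<in>labs N L. 0 < k1 r) \<longrightarrow> (\<forall>r\<in>labs N L. 0 < k2 r) \<longrightarrow>
           (\<forall>i\<in>{1..N}. \<forall>l\<in>{1..max 2 (2 * L i - 1)}.
              total_deriv_iter (chain_field N L Y Yt S U V k1) l (\<lambda>x. x (S i (L i))) =
              total_deriv_iter (chain_field N L Y Yt S U V k2) l (\<lambda>x. x (S i (L i)))) \<longrightarrow>
           (\<forall>r\<in>labs N L. k1 r = k2 r)"
proof (intro allI impI)
  fix k1 k2 :: "rlab \<Rightarrow> real"
  assume pos1: "\<forall>r\<in>labs N L. 0 < k1 r" and pos2: "\<forall>r\<in>labs N L. 0 < k2 r"
    and H: "\<forall>i\<in>{1..N}. \<forall>l\<in>{1..max 2 (2 * L i - 1)}.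
              total_deriv_iter (chain_field N L Y Yt S U V k1) l (\<lambda>x. x (S i (L i))) =
              total_deriv_iter (chain_field N L Y Yt S U V k2) l (\<lambda>x. x (S i (L i)))"
  have per_i: "\<forall>j\<in>{1..L i}. k1 (Ra i j) = k2 (Ra i j) \<and> k1 (Rb i j) = k2 (Rb i j) \<and> k1 (Rc i j) = k2 (Rc i j) \<and>
           k1 (Rta i j) = k2 (Rta i j) \<and> k1 (Rtb i j) = k2 (Rtb i j) \<and> k1 (Rtc i j) = k2 (Rtc i j)"
    if i: "i \<in> {1..N}" for i
  proof -
    interpret chain N L Y Yt S U V i using assms i by unfold_locales
    show ?thesis using ident_from_tdi[OF pos1 pos2] H i by blast
  qed
  show "\<forall>r\<in>labs N L. k1 r = k2 r"
  proof
    fix r assume r: "r \<in> labs N L"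
    then obtain i j where i: "i \<in> {1..N}" and j: "j \<in> {1..L i}" and
      rr: "r \<in> {Ra i j, Rb i j, Rc i j, Rta i j, Rtb i j, Rtc i j}"
      unfolding labs_def by blast
    show "k1 r = k2 r" using per_i[OF i] j rr by auto
  qed
qed


end
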